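(* Fix an integer $j\ge 0$. Define a function $\mathrm{suc}$ from triples of integers to finite sets of triples recursively by $\mathrm{suc}(x,y,0)=\emptyset$ and, for $z\geq 1$, \[\mathrm{suc}(x,y,z)=\{(2,y{+}1,z),(3,y{+}1,z),\ldots,(x{+}1,y{+}1,z)\}\cup\{(x,x{+}1,z),(x,x{+}2,z),\ldots,(x,y,z)\}\cup \mathrm{suc}(x,x,z{-}1)\] (the second set being empty if $y\le x$). Let $T$ be the rooted labeled tree whose root has label $(j{+}1,j{+}1,j{+}1)$ and in which a vertex with label $L$ has exactly one child with label $L'$ for each $L'\in \mathrm{suc}(L)$. Then $T$ is isomorphic as a rooted tree to $BT^j(2143)$.
   Context: $B_n$ is the group of permutations $w$ of $\{-n,\ldots,-1,1,\ldots,n\}$ with $w(-i)=-w(i)$; such $w$ is determined by $[w(-n),w(-n+1),\ldots,w(-1)]$. $w$ avoids $2143$ if there are no indices $-n\le a<b<c<d\le n$ (nonzero) with $w(b)<w(a)<w(d)<w(c)$. $B_n^j(2143)$ is the set of $2143$-avoiding $w\in B_n$ with $w(i)>0$ for exactly $j$ indices $i\in\{1,\ldots,n\}$. For $\ell\ge1$ let $\beta_\ell(x)=x$ if $|x|<\ell$, $\beta_\ell(x)=x-1$ if $x<-\ell$, $\beta_\ell(x)=x+1$ if $x>\ell$. For $w\in B_n$, $1\le i\le n+1$ and $1\le \ell\le n+1$, let $w^{-i}_\ell\in B_{n+1}$ be defined by $w^{-i}_\ell(-k)=\beta_\ell(w(-k+1))$ for $i+1\le k\le n+1$, $w^{-i}_\ell(-i)=\ell$,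 $w^{-i}_\ell(-k)=\beta_\ell(w(-k))$ for $1\le k\le i-1$, extended to positive indices by $w^{-i}_\ell(k)=-w^{-i}_\ell(-k)$. The tree $BT^j(2143)$ is the rooted tree whose vertices are signed permutations, with root the identity of $B_j$ (i.e. $[-j,\ldots,-1]$), and in which the children of a vertex $w\in B_n^j(2143)$ are all $w^{-i}_\ell$ with $1\le i\le n+1$ and $m<\ell\le n+1$ that avoid $2143$, where $m=\max(\{w(-k):1\le k\le n\}\cup\{0\})$. *)

theory Defs
  imports Main
begin

text \<open>A vertex is identified with the sequence of labels on
the path from the root to it (siblings carry distinct labels, so this is faithful).\<close>

inductive_set tree_vertices :: "'a \<Rightarrow> ('a \<Rightarrow> 'a set) \<Rightarrow> 'a list set"
  for r :: 'a and C :: "'a \<Rightarrow> 'a set" where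
  root: "[r] \<in> tree_vertices r C"
| child: "p \<in> tree_vertices r C \<Longrightarrow> v \<in> C (last p) \<Longrightarrow> p @ [v] \<in> tree_vertices r C"

definition is_child_of :: "'a list \<Rightarrow> 'a list \<Rightarrow> bool" where
  "is_child_of q p \<longleftrightarrow> (\<exists>v. q = p @ [v])"

definition rooted_tree_iso :: "'a \<Rightarrow> ('a \<Rightarrow> 'a set) \<Rightarrow> 'b \<Rightarrow> ('b \<Rightarrow> 'b set) \<Rightarrow> bool" where
  "rooted_tree_iso r1 C1 r2 C2 \<longleftrightarrow>
     (\<exists>f. bij_betw f (tree_vertices r1 C1) (tree_vertices r2 C2) \<and> f [r1] = [r2] \<and>
        (\<forall>p\<in>tree_vertices r1 C1. \<forall>q\<in>tree_vertices r1 C1.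
            is_child_of q p \<longleftrightarrow> is_child_of (f q) (f p)))"

primrec sucN :: "int \<Rightarrow> int \<Rightarrow> nat \<Rightarrow> (int \<times> int \<times> int) set" where
  "sucN x y 0 = {}"
| "sucN x y (Suc n) =
     {(a, y + 1, int (Suc n)) | a. 2 \<le> a \<and> a \<le> x + 1}
   \<union> {(x, b, int (Suc n)) | b. x + 1 \<le> b \<and> b \<le> y}
   \<union> sucN x x n"

definition suc_label :: "int \<times> int \<times> int \<Rightarrow> (int \<times> int \<times> int) set" where
  "suc_label L = (case L of (x, y, z) \<Rightarrow> if z \<ge> 0 then sucN x y (nat z) else {})"

text \<open>A signed permutation w in B_n is represented by the list
[w(-n), w(-n+1), ..., w(-1)] of length n.\<close>

text \<open>Full one-line notation [w(-n),...,w(-1),w(1),...,w(n)], using w(i) = -w(-i).\<close>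

definition full_word :: "int list \<Rightarrow> int list" where
  "full_word ws = ws @ rev (map uminus ws)"

definition avoids_2143 :: "int list \<Rightarrow> bool" where
  "avoids_2143 ws \<longleftrightarrow>
     (let F = full_word ws in
      \<not> (\<exists>a b c d. a < b \<and> b < c \<and> c < d \<and> d < length F \<and>
                 F ! b < F ! a \<and> F ! a < F ! d \<and> F ! d < F ! c))"

definition beta :: "int \<Rightarrow> int \<Rightarrow> int" where
  "beta l x = (if \<bar>x\<bar> < l then x else if x \<le> -l then x - 1 else x + 1)"

text \<open>w^{-i}_l for w in B_n, 1 <= i <= n+1: listed as entries at -(n+1), ..., -1.
The entry at -k is beta(w(-k+1)) for k >= i+1, l for k = i, beta(w(-k)) for k <= i-1,
where w(-k) = ws ! (n - k).\<close>

definition insert_at :: "int list \<Rightarrow> nat \<Rightarrow> int \<Rightarrow> int list" where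
  "insert_at ws i l =
     (let n = length ws in
      map (\<lambda>k. if i + 1 \<le> k then beta l (ws ! (n - (k - 1)))
               else if k = i then l
               else beta l (ws ! (n - k)))
          (rev [1..<n + 2]))"

definition bt_children :: "int list \<Rightarrow> int list set" where
  "bt_children ws =
     (let n = length ws; m = Max (insert 0 (set ws)) in
      {insert_at ws i l | i l. 1 \<le> i \<and> i \<le> n + 1 \<and> m < l \<and> l \<le> int n + 1
                              \<and> avoids_2143 (insert_at ws i l)})"

definition bt_root :: "nat \<Rightarrow> int list" where
  "bt_root j = [- int j .. -1]"

end

theory Submission
  imports Defs
begin


definition fw :: "int list \<Rightarrow> nat \<Rightarrow> int" where
  "fw ws t = (if t < length ws then ws!t else - (ws ! (2*length ws - 1 - t)))"

lemma full_word_nth: "t < 2*length ws \<Longrightarrow> full_word ws ! t = fw ws t"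
  unfolding full_word_def fw_def by (auto simp: nth_append rev_nth mult_2)

lemma length_full_word[simp]: "length (full_word ws) = 2*length ws"
  unfolding full_word_def by simp

definition pat :: "int list \<Rightarrow> nat \<Rightarrow> nat \<Rightarrow> nat \<Rightarrow> nat \<Rightarrow> bool" where
  "pat ws a b c d \<longleftrightarrow> a<b \<and> b<c \<and> c<d \<and> d < 2*length ws \<and>
     fw ws b < fw ws a \<and> fw ws a < fw ws d \<and> fw ws d < fw ws c"

lemma avoids_pat: "avoids_2143 ws \<longleftrightarrow> \<not>(\<exists>a b c d. pat ws a b c d)"
proof -
  have "avoids_2143 ws \<longleftrightarrow> \<not>(\<exists>a b c d. a<b \<and> b<c \<and> c<d \<and> d < 2*length ws \<and>
     full_word ws ! b < full_word ws ! a \<and> full_word ws ! a < full_word ws ! d \<and> full_word ws ! d < full_word ws ! c)"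
    unfolding avoids_2143_def Let_def by simp
  also have "\<dots> \<longleftrightarrow> \<not>(\<exists>a b c d. pat ws a b c d)"
    unfolding pat_def
    apply (intro arg_cong[where f=Not] ex_cong1 conj_cong refl)
    by (auto simp: full_word_nth)
  finally show ?thesis .
qed

lemma fw_mirror: "t < 2*length ws \<Longrightarrow> fw ws (2*length ws - Suc t) = - fw ws t"
  unfolding fw_def by (auto simp: mult_2)

lemma pat_mirror:
  assumes "pat ws a b c d"
  shows "pat ws (2*length ws - 1 - d) (2*length ws - 1 - c) (2*length ws - 1 - b) (2*length ws - 1 - a)"
  using assms unfolding pat_def by (auto simp: fw_mirror)

lemma beta_mono: "0 < l \<Longrightarrow> beta l x < beta l y \<longleftrightarrow> x < y"
  unfolding beta_def by auto

lemma beta_neg: "0 < l \<Longrightarrow> beta l (-x) = - beta l x"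
  unfolding beta_def by auto

definition ins :: "nat \<Rightarrow> int \<Rightarrow> int list \<Rightarrow> int list" where
  "ins p l ws = map (beta l) (take p ws) @ l # map (beta l) (drop p ws)"

lemma length_ins[simp]: "p \<le> length ws \<Longrightarrow> length (ins p l ws) = Suc (length ws)"
  unfolding ins_def by simp

lemma ins_nth: "p \<le> length ws \<Longrightarrow> t \<le> length ws \<Longrightarrow>
   ins p l ws ! t = (if t < p then beta l (ws!t) else if t = p then l else beta l (ws!(t-1)))"
  unfolding ins_def by (auto simp: nth_append min_def nth_Cons')

lemma length_insert_at[simp]: "length (insert_at ws i l) = Suc (length ws)"
  by (simp add: insert_at_def Let_def del: upt_Suc)

lemma insert_at_ins: "1 \<le> i \<Longrightarrow> i \<le> length ws + 1 \<Longrightarrow> insert_at ws i l = ins (length ws + 1 - i) l ws"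
proof (rule nth_equalityI)
  assume a: "1 \<le> i" "i \<le> length ws + 1"
  show "length (insert_at ws i l) = length (ins (length ws + 1 - i) l ws)"
    using a by simp
  fix t assume "t < length (insert_at ws i l)"
  then have t: "t \<le> length ws" by simp
  have r: "rev [1..<length ws + 2] ! t = length ws + 1 - t" using t by (simp add: rev_nth del: upt_Suc)
  have "insert_at ws i l ! t = (if i + 1 \<le> length ws + 1 - t then beta l (ws ! (length ws - (length ws + 1 - t - 1)))
               else if length ws + 1 - t = i then l
               else beta l (ws ! (length ws - (length ws + 1 - t))))"
    using t r unfolding insert_at_def Let_def by (simp del: upt_Suc)
  also have "\<dots> = ins (length ws + 1 - i) l ws ! t"
    using a t by (auto simp: ins_nth)
  finally show "insert_at ws i l ! t = ins (length ws + 1 - i) l ws ! t" .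
qed


definition mx :: "int list \<Rightarrow> int" where
  "mx ws = Max (insert 0 (set ws))"

definition perm_ok :: "int list \<Rightarrow> bool" where
  "perm_ok ws \<longleftrightarrow> distinct (map abs ws) \<and> abs ` set ws = {1..int (length ws)}"

definition inc3 :: "int list \<Rightarrow> int \<Rightarrow> bool" where
  "inc3 ws M \<longleftrightarrow> (\<forall>a b. a < b \<longrightarrow> b < length ws \<longrightarrow> ws!a < -M \<longrightarrow> ws!b < -M \<longrightarrow> ws!a < ws!b)"

definition Inv :: "int list \<Rightarrow> bool" where
  "Inv ws \<longleftrightarrow> perm_ok ws \<and> avoids_2143 ws \<and> inc3 ws (mx ws)"

lemma mx_ge: "x \<in> set ws \<Longrightarrow> x \<le> mx ws"
  unfolding mx_def by simp

lemma mx_nth: "t < length ws \<Longrightarrow> ws!t \<le> mx ws"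
  by (simp add: mx_ge)

lemma mx_nonneg: "0 \<le> mx ws"
  unfolding mx_def by simp

lemma mx_cases: "mx ws = 0 \<or> mx ws \<in> set ws"
  unfolding mx_def using Max_in[of "insert 0 (set ws)"] by auto

lemma perm_okI:
  assumes "distinct (map abs ws)" "\<forall>x\<in>set ws. 1 \<le> \<bar>x\<bar> \<and> \<bar>x\<bar> \<le> int (length ws)"
  shows "perm_ok ws"
proof -
  have sub: "abs ` set ws \<subseteq> {1..int (length ws)}" using assms(2) by auto
  have "card (abs ` set ws) = length ws"
    using assms(1) by (metis distinct_card length_map set_map)
  then show ?thesis unfolding perm_ok_def using assms(1)
    by (metis card_atLeastAtMost_int card_subset_eq finite_atLeastAtMost_int sub diff_add_cancel nat_int)
qed

lemma perm_ok_range: "perm_ok ws \<Longrightarrow> t < length ws \<Longrightarrow> 1 \<le> \<bar>ws!t\<bar> \<and> \<bar>ws!t\<bar> \<le> int (length ws)"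
  unfolding perm_ok_def by (metis atLeastAtMost_iff image_eqI nth_mem)

lemma perm_ok_inj: "perm_ok ws \<Longrightarrow> s < length ws \<Longrightarrow> t < length ws \<Longrightarrow> \<bar>ws!s\<bar> = \<bar>ws!t\<bar> \<Longrightarrow> s = t"
  unfolding perm_ok_def by (metis distinct_conv_nth length_map nth_map)

lemma perm_ok_ex: "perm_ok ws \<Longrightarrow> 1 \<le> v \<Longrightarrow> v \<le> int (length ws) \<Longrightarrow> \<exists>t<length ws. ws!t = v \<or> ws!t = -v"
proof -
  assume a: "perm_ok ws" "1 \<le> v" "v \<le> int (length ws)"
  then have "v \<in> abs ` set ws" unfolding perm_ok_def by auto
  then obtain x where "x \<in> set ws" "\<bar>x\<bar> = v" by auto
  then show ?thesis by (metis abs_if in_set_conv_nth minus_minus)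
qed

lemma mx_le: "perm_ok ws \<Longrightarrow> mx ws \<le> int (length ws)"
  using mx_cases[of ws] perm_ok_range[of ws]
  by (metis abs_ge_self in_set_conv_nth order.trans of_nat_0_le_iff)

lemma fw_inj:
  assumes "perm_ok ws" "s < 2*length ws" "t < 2*length ws" "fw ws s = fw ws t"
  shows "s = t"
proof -
  let ?n = "length ws"
  have nz: "\<And>u. u < ?n \<Longrightarrow> ws!u \<noteq> 0" using perm_ok_range[OF assms(1)] by fastforce
  show ?thesis
  proof (cases "s < ?n")
    case True
    show ?thesis
    proof (cases "t < ?n")
      case True
      then show ?thesis using \<open>s < ?n\<close> assms perm_ok_inj[OF assms(1), of s t] unfolding fw_def by simp
    next
      case False
      then have "ws!s = - ws!(2*?n-1-t)" using \<open>s<?n\<close> assms unfolding fw_def by simp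
      then have "s = 2*?n-1-t" using perm_ok_inj[OF assms(1), of s "2*?n-1-t"] \<open>s<?n\<close> False assms by simp
      then show ?thesis using nz[OF \<open>s < ?n\<close>] \<open>ws!s = - ws!(2*?n-1-t)\<close> by simp
    qed
  next
    case False
    show ?thesis
    proof (cases "t < ?n")
      case True
      then have "ws!t = - ws!(2*?n-1-s)" using False assms unfolding fw_def by simp
      then have "t = 2*?n-1-s" using perm_ok_inj[OF assms(1), of t "2*?n-1-s"] True False assms by simp
      then show ?thesis using nz[OF True] \<open>ws!t = - ws!(2*?n-1-s)\<close> by simp
    next
      case False
      then have "ws!(2*?n-1-s) = ws!(2*?n-1-t)" using \<open>\<not> s < ?n\<close> assms unfolding fw_def by simp
      then have "2*?n-1-s = 2*?n-1-t" using perm_ok_inj[OF assms(1)] False \<open>\<not> s < ?n\<close> assms by simp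
      then show ?thesis using False \<open>\<not> s < ?n\<close> assms by simp
    qed
  qed
qed


lemma beta_abs: "0 < l \<Longrightarrow> \<bar>beta l x\<bar> = (if \<bar>x\<bar> < l then \<bar>x\<bar> else \<bar>x\<bar> + 1)"
  unfolding beta_def by auto

locale insctx =
  fixes ws :: "int list" and p :: nat and l :: int
  assumes pok: "perm_ok ws" and i3: "inc3 ws (mx ws)" and lgt: "mx ws < l"
    and lle: "l \<le> int (length ws) + 1" and ple: "p \<le> length ws"
begin

abbreviation "w2 \<equiv> ins p l ws"

lemma l_pos: "0 < l" using lgt mx_nonneg[of ws] by simp

lemma len_w2[simp]: "length w2 = Suc (length ws)" using ple by simp

lemma ws_pos: "t < length ws \<Longrightarrow> 0 < ws!t \<Longrightarrow> beta l (ws!t) = ws!t"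
  using mx_nth[of t ws] lgt unfolding beta_def by auto

lemma ws_neg: "t < length ws \<Longrightarrow> ws!t < 0 \<Longrightarrow> beta l (ws!t) < 0"
  using l_pos unfolding beta_def by auto

lemma ws_nz: "t < length ws \<Longrightarrow> ws!t \<noteq> 0"
  using perm_ok_range[OF pok] by fastforce

lemma w2_p[simp]: "w2!p = l" using ple by (simp add: ins_nth)

definition src :: "nat \<Rightarrow> nat" where "src t = (if t < p then t else t - 1)"

lemma w2_other: "t \<le> length ws \<Longrightarrow> t \<noteq> p \<Longrightarrow> w2!t = beta l (ws!(src t)) \<and> src t < length ws"
  using ple unfolding src_def by (auto simp: ins_nth)

lemma src_mono: "s < t \<Longrightarrow> s \<noteq> p \<Longrightarrow> t \<noteq> p \<Longrightarrow> src s < src t"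
  unfolding src_def by auto

lemma w2_lt: "t \<le> length ws \<Longrightarrow> t \<noteq> p \<Longrightarrow> w2!t < l"
proof -
  assume a: "t \<le> length ws" "t \<noteq> p"
  then obtain s where s: "w2!t = beta l (ws!s)" "s < length ws" using w2_other by blast
  show ?thesis
  proof (cases "0 < ws!s")
    case True then show ?thesis using s ws_pos mx_nth[of s ws] lgt by simp
  next
    case False then show ?thesis using s ws_neg ws_nz l_pos by force
  qed
qed

lemma w2_pos_le: "t \<le> length ws \<Longrightarrow> t \<noteq> p \<Longrightarrow> 0 < w2!t \<Longrightarrow> w2!t \<le> mx ws"
proof -
  assume a: "t \<le> length ws" "t \<noteq> p" "0 < w2!t"
  then obtain s where s: "w2!t = beta l (ws!s)" "s < length ws" using w2_other by blast
  show ?thesis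
  proof (cases "0 < ws!s")
    case True then show ?thesis using s ws_pos mx_nth[of s ws] by simp
  next
    case False then show ?thesis using s ws_neg ws_nz a by force
  qed
qed

lemma w2_pos_eq: "t \<le> length ws \<Longrightarrow> t \<noteq> p \<Longrightarrow> 0 < w2!t \<Longrightarrow> w2!t = ws!(src t)"
proof -
  assume a: "t \<le> length ws" "t \<noteq> p" "0 < w2!t"
  then have s: "w2!t = beta l (ws!(src t))" "src t < length ws" using w2_other by blast+
  show ?thesis
  proof (cases "0 < ws!(src t)")
    case True then show ?thesis using s ws_pos by simp
  next
    case False then show ?thesis using s ws_neg ws_nz a by force
  qed
qed

lemma perm_w2: "perm_ok w2"
proof (rule perm_okI)
  have absw: "\<And>t. t \<le> length ws \<Longrightarrow> t \<noteq> p \<Longrightarrow> \<bar>w2!t\<bar> = (if \<bar>ws!(src t)\<bar> < l then \<bar>ws!(src t)\<bar> else \<bar>ws!(src t)\<bar> + 1)"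
    using w2_other beta_abs l_pos by simp
  show "distinct (map abs w2)"
  proof (subst distinct_conv_nth, intro allI impI)
    fix s t assume st: "s < length (map abs w2)" "t < length (map abs w2)" "s \<noteq> t"
    then have st': "s \<le> length ws" "t \<le> length ws" by auto
    show "map abs w2 ! s \<noteq> map abs w2 ! t"
    proof
      assume eq: "map abs w2 ! s = map abs w2 ! t"
      then have eq': "\<bar>w2!s\<bar> = \<bar>w2!t\<bar>" using st by simp
      show False
      proof (cases "s = p")
        case True
        then have "t \<noteq> p" using st by simp
        then show False using absw[OF st'(2)] eq' True l_pos by (auto split: if_splits)
      next
        case False
        show False
        proof (cases "t = p")
          case True
          then show False using absw[OF st'(1) False] eq' l_pos by (auto split: if_splits)
        next
          case False2: False
          have "\<bar>ws!(src s)\<bar> = \<bar>ws!(src t)\<bar>"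
            using absw[OF st'(1) False] absw[OF st'(2) False2] eq' by (auto split: if_splits)
          then have "src s = src t" using perm_ok_inj[OF pok] w2_other st' False False2 by blast
          then show False using src_mono[of s t] src_mono[of t s] False False2 st(3)
            by (metis less_irrefl_nat linorder_neqE_nat)
        qed
      qed
    qed
  qed
  show "\<forall>x\<in>set w2. 1 \<le> \<bar>x\<bar> \<and> \<bar>x\<bar> \<le> int (length w2)"
  proof
    fix x assume "x \<in> set w2"
    then obtain t where t: "t < length w2" "w2!t = x" by (auto simp: in_set_conv_nth)
    show "1 \<le> \<bar>x\<bar> \<and> \<bar>x\<bar> \<le> int (length w2)"
    proof (cases "t = p")
      case True then show ?thesis using t l_pos lle by auto
    next
      case False
      have "src t < length ws" using w2_other t False by simp
      then have "1 \<le> \<bar>ws!(src t)\<bar> \<and> \<bar>ws!(src t)\<bar> \<le> int (length ws)" using perm_ok_range[OF pok] by blast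
      then show ?thesis using absw[of t] t False by auto
    qed
  qed
qed

lemma mx_w2: "mx w2 = l"
proof -
  have "l \<in> set w2" using ple by (simp add: ins_def)
  moreover have "\<forall>x\<in>set w2. x \<le> l"
  proof
    fix x assume "x \<in> set w2"
    then obtain t where t: "t < length w2" "w2!t = x" by (auto simp: in_set_conv_nth)
    then show "x \<le> l" using w2_lt[of t] by (cases "t = p") auto
  qed
  ultimately show ?thesis unfolding mx_def using l_pos
    by (intro Max_eqI) auto
qed

lemma inc3_w2: "inc3 w2 l"
  unfolding inc3_def
proof (intro allI impI)
  fix a b assume ab: "a < b" "b < length w2" "w2!a < -l" "w2!b < -l"
  have ap: "a \<noteq> p" "b \<noteq> p" using ab l_pos by auto
  have sa: "w2!a = beta l (ws!(src a))" "src a < length ws" using w2_other ap ab by auto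
  have sb: "w2!b = beta l (ws!(src b))" "src b < length ws" using w2_other ap ab by auto
  have "ws!(src a) \<le> -l" using sa ab l_pos unfolding beta_def by (auto split: if_splits)
  moreover have "ws!(src b) \<le> -l" using sb ab l_pos unfolding beta_def by (auto split: if_splits)
  moreover have "src a < src b" using src_mono ab ap by simp
  ultimately have "ws!(src a) < ws!(src b)" using i3 lgt sb unfolding inc3_def by force
  then show "w2!a < w2!b" using sa sb beta_mono l_pos by simp
qed

end
context insctx begin

definition Q :: nat where "Q = 2*length ws + 1 - p"
definition e :: "nat \<Rightarrow> nat" where "e t = (if t < p then t else if t < Q then t - 1 else t - 2)"

lemma Q_ge: "length ws + 1 \<le> Q" using ple unfolding Q_def by simp
lemma Q_lt: "Q < 2 * length w2" using ple unfolding Q_def by simp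

lemma fw_w2_p: "fw w2 p = l" using ple unfolding fw_def by simp
lemma fw_w2_Q: "fw w2 Q = -l"
proof -
  have "2 * Suc (length ws) - 1 - Q = p" using ple unfolding Q_def by simp
  then show ?thesis using Q_ge unfolding fw_def by simp
qed

lemma fw_w2_other:
  assumes "t < 2 * length w2" "t \<noteq> p" "t \<noteq> Q"
  shows "fw w2 t = beta l (fw ws (e t)) \<and> e t < 2 * length ws"
proof (cases "t \<le> length ws")
  case True
  have s: "w2!t = beta l (ws!(src t))" "src t < length ws" using w2_other True assms by auto
  have es: "e t = src t" using True Q_ge unfolding src_def e_def by auto
  have "fw w2 t = w2!t" using True unfolding fw_def by simp
  moreover have "fw ws (e t) = ws!(src t)" using es s unfolding fw_def by simp
  ultimately show ?thesis using s es by simp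
next
  case False
  define u where "u = 2*length ws + 1 - t"
  have u: "u \<le> length ws" "u \<noteq> p" using False assms unfolding u_def Q_def by auto
  have "fw w2 t = - (w2!u)" using False unfolding fw_def u_def by simp
  also have "\<dots> = beta l (- (ws!(src u)))" using w2_other[OF u] beta_neg l_pos by simp
  finally have f: "fw w2 t = beta l (- (ws!(src u)))" .
  show ?thesis
  proof (cases "t < Q")
    case True
    then have "p < u" using False u unfolding u_def Q_def by auto
    then have "src u = 2*length ws - t" "e t = t - 1" using True False unfolding src_def e_def u_def by auto
    moreover have "fw ws (t - 1) = - (ws!(2*length ws - t))" using False assms unfolding fw_def by auto
    moreover have "t - 1 < 2 * length ws" using True False unfolding Q_def by simp
    ultimately show ?thesis using f assms by simp
  next
    case False2: False
    then have "u < p" using False u assms unfolding u_def Q_def by auto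
    then have "src u = u" "e t = t - 2" using False2 False ple unfolding src_def e_def u_def by auto
    moreover have "fw ws (t - 2) = - (ws!u)" using False2 Q_ge assms unfolding fw_def u_def Q_def
      by (auto simp: numeral_2_eq_2)
    ultimately show ?thesis using f assms False2 Q_ge by simp
  qed
qed

lemma e_mono: "s < t \<Longrightarrow> s \<noteq> p \<Longrightarrow> t \<noteq> p \<Longrightarrow> s \<noteq> Q \<Longrightarrow> t \<noteq> Q \<Longrightarrow> e s < e t"
  using ple Q_ge unfolding e_def by auto

lemma pat_transfer:
  assumes "pat w2 a b c d" "p \<notin> {a,b,c,d}" "Q \<notin> {a,b,c,d}"
  shows "pat ws (e a) (e b) (e c) (e d)"
proof -
  have lt: "a < 2*length w2" "b < 2*length w2" "c < 2*length w2" "d < 2*length w2"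
    using assms(1) unfolding pat_def by auto
  have np: "a \<noteq> p" "b \<noteq> p" "c \<noteq> p" "d \<noteq> p" "a \<noteq> Q" "b \<noteq> Q" "c \<noteq> Q" "d \<noteq> Q"
    using assms(2,3) by auto
  have fa: "fw w2 a = beta l (fw ws (e a))" using fw_w2_other[OF lt(1)] np by simp
  have fb: "fw w2 b = beta l (fw ws (e b))" using fw_w2_other[OF lt(2)] np by simp
  have fc: "fw w2 c = beta l (fw ws (e c))" using fw_w2_other[OF lt(3)] np by simp
  have fd: "fw w2 d = beta l (fw ws (e d))" "e d < 2*length ws" using fw_w2_other[OF lt(4)] np by simp_all
  have P: "a<b" "b<c" "c<d" "fw w2 b < fw w2 a" "fw w2 a < fw w2 d" "fw w2 d < fw w2 c"
    using assms(1) unfolding pat_def by auto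
  have "e a < e b" using e_mono P np by simp
  moreover have "e b < e c" using e_mono P np by simp
  moreover have "e c < e d" using e_mono P np by simp
  moreover have "fw ws (e b) < fw ws (e a)" using P(4) fa fb beta_mono[OF l_pos] by simp
  moreover have "fw ws (e a) < fw ws (e d)" using P(5) fa fd beta_mono[OF l_pos] by simp
  moreover have "fw ws (e d) < fw ws (e c)" using P(6) fc fd beta_mono[OF l_pos] by simp
  ultimately show ?thesis using fd(2) unfolding pat_def by simp
qed

lemma p_role:
  assumes "pat w2 a b c d" "p \<in> {a,b,c,d}"
  shows "c = p"
proof -
  have P: "a<b" "b<c" "c<d" "d < 2*length w2" "fw w2 b < fw w2 a" "fw w2 a < fw w2 d" "fw w2 d < fw w2 c"
    using assms(1) unfolding pat_def by auto
  have left: "\<And>t. t < p \<Longrightarrow> fw w2 t < l"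
  proof -
    fix t assume t: "t < p"
    then have "t \<le> length ws" "t \<noteq> p" using ple by auto
    moreover then have "fw w2 t = w2!t" unfolding fw_def by simp
    ultimately show "fw w2 t < l" using w2_lt by simp
  qed
  consider "a = p" | "b = p" | "c = p" | "d = p" using assms(2) by auto
  then show ?thesis
  proof cases
    case 1
    show ?thesis
    proof (rule ccontr)
      have "l < fw w2 d" "fw w2 d < fw w2 c" using P 1 fw_w2_p by auto
      have cn: "length ws + 1 \<le> c"
      proof (rule ccontr)
        assume "\<not> length ws + 1 \<le> c"
        then have "fw w2 c = w2!c" "c \<le> length ws" unfolding fw_def by auto
        then show False using w2_lt[of c] 1 P \<open>l < fw w2 d\<close> \<open>fw w2 d < fw w2 c\<close> by auto
      qed
      define \<alpha> where "\<alpha> = 2*length ws + 1 - d"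
      define \<beta> where "\<beta> = 2*length ws + 1 - c"
      have ab: "\<alpha> < \<beta>" "\<beta> < length w2" using cn P unfolding \<alpha>_def \<beta>_def by auto
      have fc: "fw w2 c = - (w2!\<beta>)" using cn unfolding fw_def \<beta>_def by simp
      have fd: "fw w2 d = - (w2!\<alpha>)" using cn P unfolding fw_def \<alpha>_def by simp
      have "w2!\<alpha> < -l" "w2!\<beta> < -l" using fc fd \<open>l < fw w2 d\<close> \<open>fw w2 d < fw w2 c\<close> by auto
      then have "w2!\<alpha> < w2!\<beta>" using inc3_w2 ab unfolding inc3_def by blast
      then show False using fc fd \<open>fw w2 d < fw w2 c\<close> by simp
    qed
  next
    case 2
    then show ?thesis using P left[of a] fw_w2_p by simp
  next
    case 3 then show ?thesis .
  next
    case 4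
    then show ?thesis using P left[of c] fw_w2_p by simp
  qed
qed

lemma avoid_iff:
  assumes "avoids_2143 ws"
  shows "avoids_2143 w2 \<longleftrightarrow> \<not> (\<exists>a b d. pat w2 a b p d)"
proof
  assume "avoids_2143 w2" then show "\<not> (\<exists>a b d. pat w2 a b p d)" using avoids_pat by blast
next
  assume na: "\<not> (\<exists>a b d. pat w2 a b p d)"
  show "avoids_2143 w2"
  proof (rule ccontr)
    assume "\<not> avoids_2143 w2"
    then obtain a b c d where P: "pat w2 a b c d" using avoids_pat by blast
    show False
    proof (cases "p \<in> {a,b,c,d}")
      case True then show False using p_role[OF P True] P na by blast
    next
      case False
      show False
      proof (cases "Q \<in> {a,b,c,d}")
        case False2: True
        let ?N = "2*length w2"
        have M: "pat w2 (?N - 1 - d) (?N - 1 - c) (?N - 1 - b) (?N - 1 - a)" using pat_mirror[OF P] by simp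
        have "?N - 1 - Q = p" using ple unfolding Q_def by simp
        then have "p \<in> {?N - 1 - d, ?N - 1 - c, ?N - 1 - b, ?N - 1 - a}" using False2 by auto
        then have "?N - 1 - b = p" using p_role[OF M] by blast
        then show False using M na by metis
      next
        case False2: False
        then show False using pat_transfer[OF P False False2] assms avoids_pat by blast
      qed
    qed
  qed
qed

end

definition sortedpre :: "int list \<Rightarrow> nat \<Rightarrow> bool" where
  "sortedpre ws q \<longleftrightarrow> (\<forall>a b. a < b \<longrightarrow> b < q \<longrightarrow> ws!a < ws!b)"

definition bad :: "int list \<Rightarrow> nat \<Rightarrow> bool" where
  "bad ws q \<longleftrightarrow> (\<exists>a b. a < b \<and> b < q \<and> ws!b < ws!a \<and>
      (ws!a < 0 \<or> (\<exists>v. ws!a < v \<and> v \<le> mx ws \<and> (\<forall>t<q. ws!t \<noteq> v))))"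

context insctx begin

lemma fw_w2_left: "t \<le> length ws \<Longrightarrow> fw w2 t = w2!t"
  unfolding fw_def by simp

lemma locate:
  assumes "1 \<le> v" "v < l" "\<forall>t<p. ws!t \<noteq> v"
  shows "\<exists>d. p < d \<and> d < 2*length w2 \<and> fw w2 d = v"
proof -
  have "v \<le> int (length ws)" using assms lle by simp
  then obtain t where t: "t < length ws" "ws!t = v \<or> ws!t = -v" using perm_ok_ex[OF pok] assms by blast
  show ?thesis
  proof (cases "ws!t = v")
    case True
    then have tp: "p \<le> t" using assms(3) by (metis not_le)
    have "w2!(t+1) = beta l (ws!t)" using tp t ple by (simp add: ins_nth)
    also have "\<dots> = v" using True assms unfolding beta_def by simp
    finally have "fw w2 (t+1) = v" using fw_w2_left t by simp
    then show ?thesis using tp t by (intro exI[of _ "t+1"]) simp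
  next
    case False
    then have m: "ws!t = -v" using t by simp
    define t' where "t' = (if t < p then t else t+1)"
    have t': "t' \<le> length ws" "w2!t' = beta l (ws!t)" using t ple unfolding t'_def by (auto simp: ins_nth)
    have "beta l (ws!t) = -v" using m assms unfolding beta_def by auto
    then have ft: "fw w2 t' = -v" using t' fw_w2_left by simp
    define d where "d = 2*length w2 - Suc t'"
    have "fw w2 d = v" using fw_mirror[of t' w2] ft t' unfolding d_def by simp
    moreover have "p < d" "d < 2*length w2" using t' ple unfolding d_def by auto
    ultimately show ?thesis by blast
  qed
qed

lemma pat_p_iff:
  "(\<exists>a b d. pat w2 a b p d) \<longleftrightarrow> (if l = mx ws + 1 then bad ws p else \<not> sortedpre ws p)"
proof
  assume "\<exists>a b d. pat w2 a b p d"
  then obtain a b d where P: "pat w2 a b p d" by blast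
  have P': "a<b" "b<p" "p<d" "d < 2*length w2" "fw w2 b < fw w2 a" "fw w2 a < fw w2 d" "fw w2 d < l"
    using P fw_w2_p unfolding pat_def by auto
  have ab: "a < length ws" "b < length ws" using P' ple by auto
  have wa: "fw w2 a = beta l (ws!a)" using fw_w2_left[of a] P' ple by (simp add: ins_nth)
  have wb: "fw w2 b = beta l (ws!b)" using fw_w2_left[of b] P' ple by (simp add: ins_nth)
  have desc: "ws!b < ws!a" using P'(5) wa wb beta_mono l_pos by simp
  show "if l = mx ws + 1 then bad ws p else \<not> sortedpre ws p"
  proof (cases "l = mx ws + 1")
    case True
    have "ws!a < 0 \<or> (\<exists>v. ws!a < v \<and> v \<le> mx ws \<and> (\<forall>t<p. ws!t \<noteq> v))"
    proof (cases "ws!a < 0")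
      case False
      then have pos: "0 < ws!a" using ws_nz ab by force
      then have "fw w2 a = ws!a" using wa ws_pos ab by simp
      have "\<forall>t<p. ws!t \<noteq> fw w2 d"
      proof (intro allI impI)
        fix t assume tp: "t < p"
        show "ws!t \<noteq> fw w2 d"
        proof
          assume eq: "ws!t = fw w2 d"
          have "0 < ws!t" using eq P' pos \<open>fw w2 a = ws!a\<close> by simp
          then have "fw w2 t = ws!t" using fw_w2_left[of t] tp ple ws_pos by (simp add: ins_nth)
          then have "t = d" using fw_inj[OF perm_w2, of t d] eq tp P' ple by simp
          then show False using tp P' by simp
        qed
      qed
      moreover have "ws!a < fw w2 d" "fw w2 d \<le> mx ws" using P' True \<open>fw w2 a = ws!a\<close> by auto
      ultimately show ?thesis by blast
    qed simp
    then show ?thesis using True P' desc unfolding bad_def by auto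
  next
    case False
    then show ?thesis using P' desc unfolding sortedpre_def by force
  qed
next
  assume H: "if l = mx ws + 1 then bad ws p else \<not> sortedpre ws p"
  obtain a b where ab: "a < b" "b < p" "ws!b < ws!a"
    and alt: "ws!a < 0 \<or> (\<exists>v. ws!a < v \<and> v < l \<and> (\<forall>t<p. ws!t \<noteq> v))"
  proof (cases "l = mx ws + 1")
    case True
    then obtain a b where "a < b" "b < p" "ws!b < ws!a"
       "ws!a < 0 \<or> (\<exists>v. ws!a < v \<and> v \<le> mx ws \<and> (\<forall>t<p. ws!t \<noteq> v))"
      using H unfolding bad_def by auto
    then show ?thesis using that True by force
  next
    case False
    then obtain a b where ab0: "a < b" "b < p" "\<not> ws!a < ws!b" using H unfolding sortedpre_def by auto
    then have "ws!a \<noteq> ws!b" using perm_ok_inj[OF pok, of a b] ple by auto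
    then have d: "ws!b < ws!a" using ab0 by simp
    have "ws!a < 0 \<or> (\<exists>v. ws!a < v \<and> v < l \<and> (\<forall>t<p. ws!t \<noteq> v))"
    proof (cases "ws!a < 0")
      case False
      have "mx ws + 1 < l" using lgt \<open>l \<noteq> mx ws + 1\<close> by simp
      moreover have "ws!a \<le> mx ws" using mx_nth ab0 ple by simp
      moreover have "\<forall>t<p. ws!t \<noteq> l - 1"
      proof (intro allI impI)
        fix t assume "t < p"
        then have "ws!t \<le> mx ws" using mx_nth ple by simp
        then show "ws!t \<noteq> l - 1" using \<open>mx ws + 1 < l\<close> by simp
      qed
      ultimately show ?thesis by (intro disjI2 exI[of _ "l - 1"]) auto
    qed simp
    then show ?thesis using that ab0 d by blast
  qed
  have abn: "a < length ws" "b < length ws" using ab ple by auto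
  have wa: "fw w2 a = beta l (ws!a)" using fw_w2_left[of a] ab ple by (simp add: ins_nth)
  have wb: "fw w2 b = beta l (ws!b)" using fw_w2_left[of b] ab ple by (simp add: ins_nth)
  have fba: "fw w2 b < fw w2 a" using wa wb ab beta_mono l_pos by simp
  obtain d where d: "p < d" "d < 2*length w2" "fw w2 a < fw w2 d" "fw w2 d < l"
  proof (cases "ws!a < 0")
    case True
    show ?thesis
    proof (cases "\<bar>ws!a\<bar> < l")
      case True
      then have "fw w2 a = ws!a" using wa unfolding beta_def by simp
      define d where "d = 2*length w2 - Suc a"
      have "fw w2 d = - ws!a" using fw_mirror[of a w2] \<open>fw w2 a = ws!a\<close> abn unfolding d_def by simp
      moreover have "p < d" "d < 2*length w2" using abn ab ple unfolding d_def by auto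
      ultimately show ?thesis using that True \<open>ws!a < 0\<close> \<open>fw w2 a = ws!a\<close> by auto
    next
      case False
      then have "fw w2 a = ws!a - 1" "ws!a \<le> -l" using wa \<open>ws!a < 0\<close> unfolding beta_def by auto
      moreover have "p < Q" "Q < 2*length w2" using Q_ge Q_lt ple by auto
      ultimately show ?thesis using that[of Q] fw_w2_Q l_pos by simp
    qed
  next
    case False
    then obtain v where v: "ws!a < v" "v < l" "\<forall>t<p. ws!t \<noteq> v" using alt by blast
    have pos: "0 < ws!a" using False ws_nz abn by force
    then have "fw w2 a = ws!a" using wa ws_pos abn by simp
    obtain d where "p < d" "d < 2*length w2" "fw w2 d = v" using locate[of v] v pos by auto
    then show ?thesis using that \<open>fw w2 a = ws!a\<close> v by auto
  qed
  have "pat w2 a b p d" unfolding pat_def using ab d fba fw_w2_p by simp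
  then show "\<exists>a b d. pat w2 a b p d" by blast
qed

lemma avoid_char:
  assumes "avoids_2143 ws"
  shows "avoids_2143 w2 \<longleftrightarrow> (if l = mx ws + 1 then \<not> bad ws p else sortedpre ws p)"
  using avoid_iff[OF assms] pat_p_iff by auto

definition tgt :: "nat \<Rightarrow> nat" where "tgt t = (if t < p then t else Suc t)"

lemma tgt_props: "t < length ws \<Longrightarrow> tgt t \<le> length ws \<and> tgt t \<noteq> p \<and> w2!(tgt t) = beta l (ws!t) \<and> src (tgt t) = t"
  using ple unfolding tgt_def src_def by (auto simp: ins_nth)

lemma tgt_src: "u \<le> length ws \<Longrightarrow> u \<noteq> p \<Longrightarrow> tgt (src u) = u"
  unfolding tgt_def src_def by auto

lemma tgt_mono: "tgt s < tgt t \<longleftrightarrow> s < t"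
  unfolding tgt_def by auto

lemma tgt_lt_hi: "p < q \<Longrightarrow> tgt t < q \<longleftrightarrow> t < q - 1"
  unfolding tgt_def by auto

lemma tgt_lt_lo: "q \<le> p \<Longrightarrow> tgt t < q \<longleftrightarrow> t < q"
  unfolding tgt_def by auto

lemma beta_neg_iff: "beta l x < 0 \<longleftrightarrow> x < 0"
  using l_pos unfolding beta_def by auto

lemma sortedpre_w2:
  assumes "q \<le> Suc (length ws)"
  shows "sortedpre w2 q \<longleftrightarrow> (if q \<le> p then sortedpre ws q else q = Suc p \<and> sortedpre ws p)"
proof (cases "q \<le> p")
  case True
  have "sortedpre w2 q \<longleftrightarrow> sortedpre ws q"
    unfolding sortedpre_def
  proof (intro iffI allI impI)
    fix a b assume H: "\<forall>a b. a < b \<longrightarrow> b < q \<longrightarrow> w2 ! a < w2 ! b" and ab: "a < b" "b < q"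
    then have "w2!a < w2!b" by blast
    then show "ws!a < ws!b" using ab True ple by (simp add: ins_nth beta_mono l_pos)
  next
    fix a b assume H: "\<forall>a b. a < b \<longrightarrow> b < q \<longrightarrow> ws ! a < ws ! b" and ab: "a < b" "b < q"
    then have "ws!a < ws!b" by blast
    then show "w2!a < w2!b" using ab True ple by (simp add: ins_nth beta_mono l_pos)
  qed
  then show ?thesis using True by simp
next
  case False
  show ?thesis
  proof (cases "q = Suc p")
    case True
    have "sortedpre w2 q \<longleftrightarrow> sortedpre ws p"
      unfolding sortedpre_def
    proof (intro iffI allI impI)
      fix a b assume H: "\<forall>a b. a < b \<longrightarrow> b < q \<longrightarrow> w2 ! a < w2 ! b" and ab: "a < b" "b < p"
      then have "w2!a < w2!b" using True by simp
      then show "ws!a < ws!b" using ab ple by (simp add: ins_nth beta_mono l_pos)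
    next
      fix a b assume H: "\<forall>a b. a < b \<longrightarrow> b < p \<longrightarrow> ws ! a < ws ! b" and ab: "a < b" "b < q"
      show "w2!a < w2!b"
      proof (cases "b = p")
        case True
        then show ?thesis using w2_lt[of a] ab ple by simp
      next
        case False
        then have "ws!a < ws!b" using H ab \<open>q = Suc p\<close> by simp
        then show ?thesis using ab False \<open>q = Suc p\<close> ple by (simp add: ins_nth beta_mono l_pos)
      qed
    qed
    then show ?thesis using True by simp
  next
    case False2: False
    have "\<not> sortedpre w2 q"
    proof
      assume "sortedpre w2 q"
      moreover have "p < Suc p" "Suc p < q" using False False2 by auto
      ultimately have "w2!p < w2!(Suc p)" unfolding sortedpre_def by blast
      moreover have "w2!(Suc p) < l" using w2_lt[of "Suc p"] False False2 assms by simp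
      ultimately show False by simp
    qed
    then show ?thesis using False False2 by simp
  qed
qed


lemma src_lt_hi: "t < q \<Longrightarrow> t \<noteq> p \<Longrightarrow> p < q \<Longrightarrow> src t < q - 1"
  unfolding src_def by auto

lemma bad_w2_unf: "bad w2 q \<longleftrightarrow> (\<exists>a b. a < b \<and> b < q \<and> w2!b < w2!a \<and>
      (w2!a < 0 \<or> (\<exists>v. w2!a < v \<and> v \<le> l \<and> (\<forall>t<q. w2!t \<noteq> v))))"
  unfolding bad_def mx_w2 ..

lemma bad_w2_lo:
  assumes "q \<le> p"
  shows "bad w2 q \<longleftrightarrow> \<not> sortedpre ws q"
proof
  assume "bad w2 q"
  then obtain a b where ab: "a < b" "b < q" "w2!b < w2!a" unfolding bad_def by blast
  then have "ws!b < ws!a" using assms ple by (simp add: ins_nth beta_mono l_pos)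
  then show "\<not> sortedpre ws q" using ab unfolding sortedpre_def by force
next
  assume "\<not> sortedpre ws q"
  then obtain a b where ab: "a < b" "b < q" "\<not> ws!a < ws!b" unfolding sortedpre_def by blast
  then have "ws!a \<noteq> ws!b" using perm_ok_inj[OF pok, of a b] assms ple by auto
  then have "ws!b < ws!a" using ab by simp
  then have d: "w2!b < w2!a" using ab assms ple by (simp add: ins_nth beta_mono l_pos)
  have "w2!a < l" using w2_lt[of a] ab assms ple by simp
  moreover have "\<forall>t<q. w2!t \<noteq> l"
  proof (intro allI impI)
    fix t assume "t < q"
    then have "t \<le> length ws" "t \<noteq> p" using assms ple by auto
    then show "w2!t \<noteq> l" using w2_lt by fastforce
  qed
  ultimately show "bad w2 q" unfolding bad_w2_unf using ab d by blast
qed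

lemma ap_bp:
  assumes "a < b" "b < q" "w2!b < w2!a" "w2!a < 0 \<or> (\<exists>v. w2!a < v \<and> v \<le> l \<and> (\<forall>t<q. w2!t \<noteq> v))"
    "q \<le> Suc (length ws)"
  shows "a \<noteq> p" "b \<noteq> p"
proof -
  show "a \<noteq> p"
  proof
    assume "a = p" then show False using assms(4) l_pos by auto
  qed
  then show "b \<noteq> p" using w2_lt[of a] assms by auto
qed

lemma beta_pos_iff: "0 < beta l x \<longleftrightarrow> 0 < x"
  using l_pos unfolding beta_def by auto

lemma bad_w2_hi_gen:
  assumes "p < q" "q \<le> Suc (length ws)" "l \<noteq> mx ws + 1"
  shows "bad w2 q \<longleftrightarrow> \<not> sortedpre ws (q - 1)"
proof
  assume "bad w2 q"
  then obtain a b where ab: "a < b" "b < q" "w2!b < w2!a"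
    "w2!a < 0 \<or> (\<exists>v. w2!a < v \<and> v \<le> l \<and> (\<forall>t<q. w2!t \<noteq> v))" unfolding bad_w2_unf by blast
  note np = ap_bp[OF ab assms(2)]
  have "src a < src b" "src b < q - 1" using src_mono src_lt_hi ab np assms by auto
  moreover have "ws!(src b) < ws!(src a)" using ab w2_other[of a] w2_other[of b] np assms
    by (simp add: beta_mono l_pos)
  ultimately show "\<not> sortedpre ws (q - 1)" unfolding sortedpre_def by force
next
  assume "\<not> sortedpre ws (q - 1)"
  then obtain a b where ab: "a < b" "b < q - 1" "\<not> ws!a < ws!b" unfolding sortedpre_def by blast
  have "b < length ws" using ab assms by simp
  then have "ws!a \<noteq> ws!b" using perm_ok_inj[OF pok, of a b] ab by auto
  then have d: "ws!b < ws!a" using ab by simp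
  have abn: "a < length ws" "b < length ws" using ab assms by auto
  note ta = tgt_props[OF abn(1)] and tb = tgt_props[OF abn(2)]
  have lt: "tgt a < tgt b" "tgt b < q" using tgt_mono tgt_lt_hi assms ab by auto
  have d2: "w2!(tgt b) < w2!(tgt a)" using ta tb d by (simp add: beta_mono l_pos)
  have "w2!(tgt a) < 0 \<or> (\<exists>v. w2!(tgt a) < v \<and> v \<le> l \<and> (\<forall>t<q. w2!t \<noteq> v))"
  proof (cases "w2!(tgt a) < 0")
    case False
    then have "0 < w2!(tgt a)" using ta ws_nz[OF abn(1)] beta_neg_iff beta_pos_iff by force
    then have "w2!(tgt a) \<le> mx ws" using w2_pos_le[of "tgt a"] ta by blast
    moreover have "mx ws < l - 1" using lgt assms by simp
    moreover have "\<forall>t<q. w2!t \<noteq> l - 1"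
    proof (intro allI impI)
      fix t assume "t < q"
      show "w2!t \<noteq> l - 1"
      proof (cases "t = p")
        case False
        then have "w2!t \<le> 0 \<or> w2!t \<le> mx ws" using w2_pos_le[of t] \<open>t < q\<close> assms by force
        then show ?thesis using \<open>mx ws < l - 1\<close> mx_nonneg[of ws] by auto
      qed simp
    qed
    ultimately show ?thesis by (intro disjI2 exI[of _ "l - 1"]) auto
  qed simp
  then show "bad w2 q" unfolding bad_w2_unf using lt d2 by blast
qed

lemma bad_w2_hi_eq:
  assumes "p < q" "q \<le> Suc (length ws)" "l = mx ws + 1"
  shows "bad w2 q \<longleftrightarrow> bad ws (q - 1)"
proof
  assume "bad w2 q"
  then obtain a b where ab: "a < b" "b < q" "w2!b < w2!a"
    "w2!a < 0 \<or> (\<exists>v. w2!a < v \<and> v \<le> l \<and> (\<forall>t<q. w2!t \<noteq> v))" unfolding bad_w2_unf by blast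
  note np = ap_bp[OF ab assms(2)]
  have lt: "src a < src b" "src b < q - 1" using src_mono src_lt_hi ab np assms by auto
  have oa: "w2!a = beta l (ws!(src a))" "src a < length ws" using w2_other[of a] np ab assms by auto
  have ob: "w2!b = beta l (ws!(src b))" using w2_other[of b] np ab assms by auto
  have d: "ws!(src b) < ws!(src a)" using ab oa ob by (simp add: beta_mono l_pos)
  have "ws!(src a) < 0 \<or> (\<exists>v. ws!(src a) < v \<and> v \<le> mx ws \<and> (\<forall>t<q - 1. ws!t \<noteq> v))"
  proof (cases "w2!a < 0")
    case True then show ?thesis using oa beta_neg_iff by simp
  next
    case False
    then obtain v where v: "w2!a < v" "v \<le> l" "\<forall>t<q. w2!t \<noteq> v" using ab by blast
    have "v \<noteq> l" using v(3) assms(1) w2_p by metis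
    then have vM: "v \<le> mx ws" using v assms by simp
    have "ws!(src a) \<noteq> 0" using oa ws_nz by simp
    then have pos: "0 < w2!a" using False oa beta_neg_iff beta_pos_iff by force
    then have eqa: "w2!a = ws!(src a)" using w2_pos_eq np ab assms by simp
    have "\<forall>t<q - 1. ws!t \<noteq> v"
    proof (intro allI impI)
      fix t assume tq: "t < q - 1"
      show "ws!t \<noteq> v"
      proof
        assume wt: "ws!t = v"
        have tn: "t < length ws" using tq assms by simp
        have "w2!(tgt t) = beta l v" using tgt_props[OF tn] wt by simp
        also have "\<dots> = v" using v pos vM lgt unfolding beta_def by auto
        finally show False using v(3) tgt_lt_hi[of q t] tq assms by auto
      qed
    qed
    then show ?thesis using v eqa vM by auto
  qed
  then show "bad ws (q - 1)" unfolding bad_def using lt d by blast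
next
  assume "bad ws (q - 1)"
  then obtain a b where ab: "a < b" "b < q - 1" "ws!b < ws!a"
    and wit: "ws!a < 0 \<or> (\<exists>v. ws!a < v \<and> v \<le> mx ws \<and> (\<forall>t<q - 1. ws!t \<noteq> v))"
    unfolding bad_def by blast
  have abn: "a < length ws" "b < length ws" using ab assms by auto
  note ta = tgt_props[OF abn(1)] and tb = tgt_props[OF abn(2)]
  have lt: "tgt a < tgt b" "tgt b < q" using tgt_mono tgt_lt_hi assms ab by auto
  have d2: "w2!(tgt b) < w2!(tgt a)" using ta tb ab by (simp add: beta_mono l_pos)
  have "w2!(tgt a) < 0 \<or> (\<exists>v. w2!(tgt a) < v \<and> v \<le> l \<and> (\<forall>t<q. w2!t \<noteq> v))"
  proof (cases "ws!a < 0")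
    case True then show ?thesis using ta beta_neg_iff by simp
  next
    case False
    then obtain v where v: "ws!a < v" "v \<le> mx ws" "\<forall>t<q - 1. ws!t \<noteq> v" using wit by blast
    have pos: "0 < ws!a" using False ws_nz abn by force
    then have eqa: "w2!(tgt a) = ws!a" using ta ws_pos abn by simp
    have "\<forall>t<q. w2!t \<noteq> v"
    proof (intro allI impI)
      fix t assume tq: "t < q"
      show "w2!t \<noteq> v"
      proof (cases "t = p")
        case True then show ?thesis using v lgt by simp
      next
        case False
        have o: "w2!t = beta l (ws!(src t))" "src t < length ws" using w2_other[of t] False tq assms by auto
        have sl: "src t < q - 1" using src_lt_hi tq False assms by simp
        show ?thesis
        proof
          assume "w2!t = v"
          then have "0 < beta l (ws!(src t))" using o v pos by simp
          then have "0 < ws!(src t)" using beta_pos_iff o by simp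
          then have "ws!(src t) = v" using ws_pos o \<open>w2!t = v\<close> by simp
          then show False using v(3) sl by blast
        qed
      qed
    qed
    then show ?thesis using v eqa lgt assms by auto
  qed
  then show "bad w2 q" unfolding bad_w2_unf using lt d2 by blast
qed

end



lemma max_char:
  assumes "\<forall>q\<le>N. P q \<longleftrightarrow> q \<le> R" "R \<le> (N::nat)"
  shows "Max {q. q \<le> N \<and> P q} = R"
proof -
  have "{q. q \<le> N \<and> P q} = {..R}" using assms by auto
  then show ?thesis by (simp, intro Max_eqI) auto
qed

definition kk :: "int list \<Rightarrow> nat" where
  "kk ws = Max {q. q \<le> length ws \<and> sortedpre ws q}"

lemma sortedpre_mono: "sortedpre ws q \<Longrightarrow> q' \<le> q \<Longrightarrow> sortedpre ws q'"
  unfolding sortedpre_def by auto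

lemma sortedpre_0: "sortedpre ws 0"
  unfolding sortedpre_def by auto

lemma kk_le: "kk ws \<le> length ws"
proof -
  have "finite {q. q \<le> length ws \<and> sortedpre ws q}" by simp
  moreover have "0 \<in> {q. q \<le> length ws \<and> sortedpre ws q}" using sortedpre_0 by simp
  ultimately have "kk ws \<in> {q. q \<le> length ws \<and> sortedpre ws q}" unfolding kk_def by (intro Max_in) auto
  then show ?thesis by simp
qed

lemma kk_iff: "q \<le> length ws \<Longrightarrow> sortedpre ws q \<longleftrightarrow> q \<le> kk ws"
proof -
  assume q: "q \<le> length ws"
  have fin: "finite {q. q \<le> length ws \<and> sortedpre ws q}" by simp
  have ne: "0 \<in> {q. q \<le> length ws \<and> sortedpre ws q}" using sortedpre_0 by simp
  have "kk ws \<in> {q. q \<le> length ws \<and> sortedpre ws q}" unfolding kk_def using fin ne by (intro Max_in) auto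
  then have "sortedpre ws (kk ws)" by simp
  moreover have "sortedpre ws q \<Longrightarrow> q \<le> kk ws" unfolding kk_def using q fin by (simp add: Max_ge)
  ultimately show ?thesis using sortedpre_mono by blast
qed

lemma sorted_not_bad: "sortedpre ws q \<Longrightarrow> \<not> bad ws q"
  unfolding sortedpre_def bad_def by force

definition GG :: "int list \<Rightarrow> nat set" where
  "GG ws = {q. q \<le> length ws \<and> \<not> bad ws q}"

definition yy :: "int list \<Rightarrow> nat" where
  "yy ws = card (GG ws)"

lemma GG_fin: "finite (GG ws)" unfolding GG_def by simp

lemma GG_low: "q \<le> kk ws \<Longrightarrow> q \<in> GG ws"
  unfolding GG_def using kk_le[of ws] kk_iff[of q ws] sorted_not_bad by auto

lemma card_split_GG: "p \<le> kk ws \<Longrightarrow> card {q \<in> GG ws. p \<le> q} = yy ws - p"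
proof -
  assume pk: "p \<le> kk ws"
  have eq: "GG ws = {..<p} \<union> {q \<in> GG ws. p \<le> q}"
  proof (rule set_eqI)
    fix x show "x \<in> GG ws \<longleftrightarrow> x \<in> {..<p} \<union> {q \<in> GG ws. p \<le> q}"
    proof (cases "x < p")
      case True then have "x \<in> GG ws" using GG_low[of x ws] pk by simp
      then show ?thesis using True by simp
    qed simp
  qed
  have "card ({..<p} \<union> {q \<in> GG ws. p \<le> q}) = card {..<p} + card {q \<in> GG ws. p \<le> q}"
    by (rule card_Un_disjoint) (auto simp: GG_fin)
  then have "yy ws = p + card {q \<in> GG ws. p \<le> q}"
    unfolding yy_def by (simp only: eq[symmetric] card_lessThan)
  then show ?thesis by simp
qed

context insctx begin

lemma kk_w2: "kk w2 = (if p \<le> kk ws then Suc p else kk ws)"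
proof -
  have "kk w2 = Max {q. q \<le> Suc (length ws) \<and> sortedpre w2 q}" unfolding kk_def by simp
  also have "\<dots> = (if p \<le> kk ws then Suc p else kk ws)"
  proof (rule max_char)
    show "\<forall>q\<le>Suc (length ws). sortedpre w2 q \<longleftrightarrow> q \<le> (if p \<le> kk ws then Suc p else kk ws)"
    proof (intro allI impI)
      fix q assume q: "q \<le> Suc (length ws)"
      have kp: "sortedpre ws p \<longleftrightarrow> p \<le> kk ws" using kk_iff[of p ws] ple by simp
      show "sortedpre w2 q \<longleftrightarrow> q \<le> (if p \<le> kk ws then Suc p else kk ws)"
      proof (cases "q \<le> p")
        case True
        then have "sortedpre w2 q \<longleftrightarrow> q \<le> kk ws" using sortedpre_w2[OF q] kk_iff[of q ws] ple by simp
        then show ?thesis using True by auto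
      next
        case False
        then have "sortedpre w2 q \<longleftrightarrow> q = Suc p \<and> p \<le> kk ws" using sortedpre_w2[OF q] kp by simp
        then show ?thesis using False by auto
      qed
    qed
    show "(if p \<le> kk ws then Suc p else kk ws) \<le> Suc (length ws)" using kk_le[of ws] ple by auto
  qed
  finally show ?thesis .
qed

lemma GG_w2_eq:
  assumes "l = mx ws + 1"
  shows "GG w2 = {q. q \<le> p \<and> q \<le> kk ws} \<union> Suc ` {q \<in> GG ws. p \<le> q}"
proof (rule set_eqI)
  fix q
  show "q \<in> GG w2 \<longleftrightarrow> q \<in> {q. q \<le> p \<and> q \<le> kk ws} \<union> Suc ` {q \<in> GG ws. p \<le> q}"
  proof (cases "q \<le> p")
    case True
    have n1: "q \<notin> Suc ` {q \<in> GG ws. p \<le> q}" using True by auto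
    have qn: "q \<le> length ws" using True ple by simp
    have "q \<in> GG w2 \<longleftrightarrow> sortedpre ws q" unfolding GG_def using bad_w2_lo[OF True] qn by simp
    also have "\<dots> \<longleftrightarrow> q \<le> kk ws" using kk_iff[OF qn] .
    finally show ?thesis using n1 True by simp
  next
    case False
    define q' where "q' = q - 1"
    have q': "q = Suc q'" "p \<le> q'" using False unfolding q'_def by auto
    have nA: "q \<notin> {q. q \<le> p \<and> q \<le> kk ws}" using False by simp
    have im: "q \<in> Suc ` {q \<in> GG ws. p \<le> q} \<longleftrightarrow> q' \<in> GG ws"
      unfolding q'(1) using q'(2) by (simp add: inj_image_mem_iff)
    show ?thesis
    proof (cases "q' \<le> length ws")
      case True
      have "bad w2 q \<longleftrightarrow> bad ws q'" using bad_w2_hi_eq[OF _ _ assms] q' True by simp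
      then have "q \<in> GG w2 \<longleftrightarrow> q' \<in> GG ws" using q' True unfolding GG_def by simp
      then show ?thesis using nA im False by auto
    next
      case False2: False
      then have "q \<notin> GG w2" "q' \<notin> GG ws" using q' unfolding GG_def by auto
      then show ?thesis using nA im False by auto
    qed
  qed
qed

lemma yy_w2_lo:
  assumes "l = mx ws + 1" "p \<le> kk ws"
  shows "yy w2 = Suc (yy ws)"
proof -
  have "{q. q \<le> p \<and> q \<le> kk ws} = {..p}" using assms by auto
  then have G: "GG w2 = {..p} \<union> Suc ` {q \<in> GG ws. p \<le> q}" using GG_w2_eq[OF assms(1)] by simp
  have "card (GG w2) = card {..p} + card (Suc ` {q \<in> GG ws. p \<le> q})"
    unfolding G by (rule card_Un_disjoint) (auto simp: GG_fin)
  also have "\<dots> = Suc p + card {q \<in> GG ws. p \<le> q}" by (simp add: card_image)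
  also have "\<dots> = Suc p + (yy ws - p)" using card_split_GG[OF assms(2)] by simp
  also have "\<dots> = Suc (yy ws)"
  proof -
    have "{..p} \<subseteq> GG ws"
    proof
      fix x assume "x \<in> {..p}" then have "x \<le> kk ws" using assms(2) by simp
      then show "x \<in> GG ws" by (rule GG_low)
    qed
    then have "card {..p} \<le> card (GG ws)" by (rule card_mono[OF GG_fin])
    then have "Suc p \<le> yy ws" unfolding yy_def by simp
    then show ?thesis by simp
  qed
  finally show ?thesis unfolding yy_def .
qed

lemma yy_w2_hi:
  assumes "l = mx ws + 1" "kk ws < p"
  shows "yy w2 = Suc (kk ws) + card {q \<in> GG ws. p \<le> q}"
proof -
  have "{q. q \<le> p \<and> q \<le> kk ws} = {..kk ws}" using assms by auto
  then have G: "GG w2 = {..kk ws} \<union> Suc ` {q \<in> GG ws. p \<le> q}" using GG_w2_eq[OF assms(1)] by simp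
  have "card (GG w2) = card {..kk ws} + card (Suc ` {q \<in> GG ws. p \<le> q})"
    unfolding G by (rule card_Un_disjoint) (use assms in \<open>auto simp: GG_fin\<close>)
  also have "\<dots> = Suc (kk ws) + card {q \<in> GG ws. p \<le> q}" by (simp add: card_image)
  finally show ?thesis unfolding yy_def .
qed

lemma yy_w2_big:
  assumes "l \<noteq> mx ws + 1" "p \<le> kk ws"
  shows "yy w2 = Suc (Suc (kk ws))"
proof -
  have "GG w2 = {..Suc (kk ws)}"
  proof (intro set_eqI iffI)
    fix q assume "q \<in> GG w2"
    then have q: "q \<le> Suc (length ws)" "\<not> bad w2 q" unfolding GG_def by auto
    show "q \<in> {..Suc (kk ws)}"
    proof (cases "q \<le> p")
      case True then show ?thesis using assms by simp
    next
      case False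
      then have "sortedpre ws (q - 1)" using bad_w2_hi_gen[of q] q assms by simp
      then have "q - 1 \<le> kk ws" using kk_iff[of "q - 1" ws] q by simp
      then show ?thesis by simp
    qed
  next
    fix q assume "q \<in> {..Suc (kk ws)}"
    then have q: "q \<le> Suc (kk ws)" by simp
    then have qn: "q \<le> Suc (length ws)" using kk_le[of ws] by simp
    have "\<not> bad w2 q"
    proof (cases "q \<le> p")
      case True
      then show ?thesis using bad_w2_lo[OF True] kk_iff[of q ws] ple assms by simp
    next
      case False
      then show ?thesis using bad_w2_hi_gen[of q] qn assms kk_iff[of "q - 1" ws] q kk_le[of ws] by simp
    qed
    then show "q \<in> GG w2" unfolding GG_def using qn by simp
  qed
  then show ?thesis unfolding yy_def by simp
qed

end



lemma tv_nonempty: "p \<in> tree_vertices r C \<Longrightarrow> p \<noteq> [] \<and> hd p = r"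
  by (induction rule: tree_vertices.induct) auto

lemma tv_snoc:
  assumes "q @ [v] \<in> tree_vertices r C" "q \<noteq> []"
  shows "q \<in> tree_vertices r C \<and> v \<in> C (last q)"
  using assms(1)
proof (cases rule: tree_vertices.cases)
  case root then show ?thesis using assms(2) by simp
next
  case (child p v')
  then show ?thesis by simp
qed

lemma tv_single: "[v] \<in> tree_vertices r C \<Longrightarrow> v = r"
  using tv_nonempty[of "[v]"] by simp

lemma tree_iso_label:
  fixes lab :: "'b \<Rightarrow> 'a" and I :: "'b \<Rightarrow> bool"
  assumes root: "I r2" "lab r2 = r1"
    and pres: "\<And>w c. I w \<Longrightarrow> c \<in> C2 w \<Longrightarrow> I c"
    and inj: "\<And>w. I w \<Longrightarrow> inj_on lab (C2 w)"
    and img: "\<And>w. I w \<Longrightarrow> lab ` C2 w = C1 (lab w)"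
  shows "rooted_tree_iso r1 C1 r2 C2"
proof -
  let ?V1 = "tree_vertices r1 C1" and ?V2 = "tree_vertices r2 C2"
  let ?g = "map lab"
  have IV: "p \<in> ?V2 \<Longrightarrow> I (last p)" for p
  proof (induction rule: tree_vertices.induct)
    case root then show ?case using assms(1) by simp
  next
    case (child p v) then show ?case using pres[OF child.IH child.hyps(2)] by simp
  qed
  have into: "p \<in> ?V2 \<Longrightarrow> ?g p \<in> ?V1" for p
  proof (induction rule: tree_vertices.induct)
    case root
    have "[r1] \<in> ?V1" by (rule tree_vertices.root)
    moreover have "?g [r2] = [r1]" using assms(2) by simp
    ultimately show ?case by metis
  next
    case (child p v)
    have "p \<noteq> []" using tv_nonempty[OF child.hyps(1)] by simp
    then have "last (?g p) = lab (last p)" by (simp add: last_map)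
    moreover have "lab v \<in> lab ` C2 (last p)" using child.hyps(2) by (rule imageI)
    then have "lab v \<in> C1 (lab (last p))" using img[OF IV[OF child.hyps(1)]] by simp
    ultimately have "lab v \<in> C1 (last (?g p))" by simp
    from tree_vertices.child[OF child.IH this] show ?case by simp
  qed
  have injg: "p \<in> ?V2 \<Longrightarrow> q \<in> ?V2 \<Longrightarrow> ?g p = ?g q \<Longrightarrow> p = q" for p q
  proof (induction arbitrary: q rule: tree_vertices.induct)
    case root
    then obtain u where "q = [u]" by (cases q) auto
    then have "u = r2" using tv_single[of u r2 C2] root.prems(1) by simp
    then show ?case using \<open>q = [u]\<close> by simp
  next
    case (child p v)
    have pne: "p \<noteq> []" using tv_nonempty[OF child.hyps(1)] by simp
    have "length q = Suc (length p)" using arg_cong[OF child.prems(2), of length] by simp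
    then obtain q0 u where q: "q = q0 @ [u]" "length q0 = length p" unfolding length_Suc_conv_rev by blast
    then have q0ne: "q0 \<noteq> []" using pne by auto
    have mem: "q0 @ [u] \<in> ?V2" using child.prems(1) q by simp
    have q0: "q0 \<in> ?V2 \<and> u \<in> C2 (last q0)" by (rule tv_snoc[OF mem q0ne])
    have "?g q0 = ?g p" "lab u = lab v" using child.prems(2) q by auto
    then have "p = q0" using child.IH[of q0] q0 by simp
    then have "q0 = p" by simp
    then have "u \<in> C2 (last p)" using q0 by simp
    then have "u = v" using inj_onD[OF inj[OF IV[OF child.hyps(1)]] \<open>lab u = lab v\<close> _ child.hyps(2)] by simp
    then show ?case using q \<open>q0 = p\<close> by simp
  qed
  have onto: "p \<in> ?V1 \<Longrightarrow> p \<in> ?g ` ?V2" for p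
  proof (induction rule: tree_vertices.induct)
    case root
    have "[r2] \<in> ?V2" by (rule tree_vertices.root)
    then show ?case using assms(2) by force
  next
    case (child p v)
    then obtain p2 where p2: "p2 \<in> ?V2" "p = ?g p2" by blast
    have "p2 \<noteq> []" using tv_nonempty[OF p2(1)] by simp
    then have "last p = lab (last p2)" using p2 by (simp add: last_map)
    then have "v \<in> lab ` C2 (last p2)" using img[OF IV[OF p2(1)]] child.hyps(2) by simp
    then obtain u where u: "u \<in> C2 (last p2)" "v = lab u" by blast
    have "p2 @ [u] \<in> ?V2" using tree_vertices.child[OF p2(1) u(1)] .
    moreover have "p @ [v] = ?g (p2 @ [u])" using p2 u by simp
    ultimately show ?case by blast
  qed
  have "inj_on ?g ?V2" unfolding inj_on_def using injg by blast
  moreover have "?g ` ?V2 = ?V1"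
  proof
    show "?g ` ?V2 \<subseteq> ?V1" using into by auto
    show "?V1 \<subseteq> ?g ` ?V2" using onto by auto
  qed
  ultimately have bij: "bij_betw ?g ?V2 ?V1" unfolding bij_betw_def by blast
  define f where "f = inv_into ?V2 ?g"
  have bf: "bij_betw f ?V1 ?V2" unfolding f_def by (rule bij_betw_inv_into[OF bij])
  have r2V: "[r2] \<in> ?V2" by (rule tree_vertices.root)
  have fr: "f [r1] = [r2]"
  proof -
    have "?g [r2] = [r1]" using assms(2) by simp
    then show ?thesis unfolding f_def using inv_into_f_f[OF bij_betw_imp_inj_on[OF bij] r2V] by simp
  qed
  have gf: "p \<in> ?V1 \<Longrightarrow> ?g (f p) = p" for p
    unfolding f_def by (rule f_inv_into_f) (use bij in \<open>auto simp: bij_betw_def\<close>)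
  have child2: "P \<in> ?V2 \<Longrightarrow> Q \<in> ?V2 \<Longrightarrow> is_child_of (?g Q) (?g P) \<longleftrightarrow> is_child_of Q P" for P Q
  proof
    assume PQ: "P \<in> ?V2" "Q \<in> ?V2" and c: "is_child_of (?g Q) (?g P)"
    then obtain u where u: "?g Q = ?g P @ [u]" unfolding is_child_of_def by blast
    have pne: "P \<noteq> []" using tv_nonempty[OF PQ(1)] by simp
    have "length Q = Suc (length P)" using arg_cong[OF u, of length] by simp
    then obtain q0 v where q: "Q = q0 @ [v]" "length q0 = length P" unfolding length_Suc_conv_rev by blast
    then have q0ne: "q0 \<noteq> []" using pne by auto
    have mem: "q0 @ [v] \<in> ?V2" using PQ(2) q by simp
    have q0: "q0 \<in> ?V2" using tv_snoc[OF mem q0ne] by simp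
    have "?g q0 = ?g P" using u q by simp
    then have "q0 = P" using injg q0 PQ by blast
    then show "is_child_of Q P" unfolding is_child_of_def using q by blast
  next
    assume "is_child_of Q P"
    then show "is_child_of (?g Q) (?g P)" unfolding is_child_of_def by auto
  qed
  have "\<forall>p\<in>?V1. \<forall>q\<in>?V1. is_child_of q p \<longleftrightarrow> is_child_of (f q) (f p)"
  proof (intro ballI)
    fix p q assume pq: "p \<in> ?V1" "q \<in> ?V1"
    have fin: "f p \<in> ?V2" "f q \<in> ?V2" using bij_betw_apply[OF bf pq(1)] bij_betw_apply[OF bf pq(2)] by simp_all
    show "is_child_of q p \<longleftrightarrow> is_child_of (f q) (f p)"
      using child2[OF fin] gf[OF pq(1)] gf[OF pq(2)] by simp
  qed
  then show ?thesis unfolding rooted_tree_iso_def using bf fr by (intro exI[of _ f]) simp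
qed



definition lab :: "int list \<Rightarrow> int \<times> int \<times> int" where
  "lab ws = (int (kk ws) + 1, int (yy ws), int (length ws) + 1 - mx ws)"

definition VP :: "int list \<Rightarrow> (nat \<times> int) set" where
  "VP ws = {(p, l). p \<le> length ws \<and> mx ws < l \<and> l \<le> int (length ws) + 1 \<and>
      (if l = mx ws + 1 then \<not> bad ws p else p \<le> kk ws)}"

lemma insctx_of_Inv:
  assumes "Inv ws" "p \<le> length ws" "mx ws < l" "l \<le> int (length ws) + 1"
  shows "insctx ws p l"
  using assms unfolding Inv_def by unfold_locales auto

lemma avoid_ins:
  assumes "Inv ws" "p \<le> length ws" "mx ws < l" "l \<le> int (length ws) + 1"
  shows "avoids_2143 (ins p l ws) \<longleftrightarrow> (if l = mx ws + 1 then \<not> bad ws p else p \<le> kk ws)"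
proof -
  interpret insctx ws p l by (rule insctx_of_Inv[OF assms])
  have "avoids_2143 ws" using assms(1) unfolding Inv_def by simp
  then show ?thesis using avoid_char kk_iff[of p ws] assms(2) by simp
qed

lemma children_eq:
  assumes "Inv ws"
  shows "bt_children ws = (\<lambda>(p, l). ins p l ws) ` VP ws"
proof (rule set_eqI)
  fix c
  have m: "Max (insert 0 (set ws)) = mx ws" unfolding mx_def ..
  show "c \<in> bt_children ws \<longleftrightarrow> c \<in> (\<lambda>(p, l). ins p l ws) ` VP ws"
  proof
    assume "c \<in> bt_children ws"
    then obtain i l where il: "c = insert_at ws i l" "1 \<le> i" "i \<le> length ws + 1" "mx ws < l"
      "l \<le> int (length ws) + 1" "avoids_2143 (insert_at ws i l)"
      unfolding bt_children_def Let_def m by blast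
    define p where "p = length ws + 1 - i"
    have p: "p \<le> length ws" "c = ins p l ws" using il insert_at_ins[of i ws l] unfolding p_def by auto
    have "avoids_2143 (ins p l ws)" using il p by simp
    then have "(p, l) \<in> VP ws" using avoid_ins[OF assms p(1) il(4,5)] p il unfolding VP_def by auto
    then show "c \<in> (\<lambda>(p, l). ins p l ws) ` VP ws" using p by force
  next
    assume "c \<in> (\<lambda>(p, l). ins p l ws) ` VP ws"
    then obtain pl where "pl \<in> VP ws" "c = (\<lambda>(p, l). ins p l ws) pl" by blast
    then obtain p l where pl: "(p, l) \<in> VP ws" "c = ins p l ws" by (cases pl) auto
    have pl': "p \<le> length ws" "mx ws < l" "l \<le> int (length ws) + 1"
      "if l = mx ws + 1 then \<not> bad ws p else p \<le> kk ws" using pl unfolding VP_def by auto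
    define i where "i = length ws + 1 - p"
    have i: "1 \<le> i" "i \<le> length ws + 1" "length ws + 1 - i = p" using pl' unfolding i_def by auto
    have ci: "c = insert_at ws i l" using insert_at_ins[OF i(1,2)] i(3) pl by simp
    have "avoids_2143 (insert_at ws i l)" using avoid_ins[OF assms pl'(1-3)] pl'(4) ci pl by simp
    then show "c \<in> bt_children ws"
      unfolding bt_children_def Let_def m using i(1,2) pl'(2,3) ci by blast
  qed
qed

lemma Inv_child:
  assumes "Inv ws" "(p, l) \<in> VP ws"
  shows "Inv (ins p l ws)"
proof -
  have pl: "p \<le> length ws" "mx ws < l" "l \<le> int (length ws) + 1"
      "if l = mx ws + 1 then \<not> bad ws p else p \<le> kk ws" using assms(2) unfolding VP_def by auto
  interpret insctx ws p l by (rule insctx_of_Inv[OF assms(1) pl(1-3)])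
  have "avoids_2143 w2" using avoid_ins[OF assms(1) pl(1-3)] pl(4) by simp
  then show ?thesis unfolding Inv_def using perm_w2 inc3_w2 mx_w2 by simp
qed

definition Lf :: "int list \<Rightarrow> nat \<times> int \<Rightarrow> int \<times> int \<times> int" where
  "Lf ws pl = (case pl of (p, l) \<Rightarrow>
     (if p \<le> kk ws then int p + 2 else int (kk ws) + 1,
      if l = mx ws + 1 then (if p \<le> kk ws then int (yy ws) + 1
                              else int (kk ws) + 1 + int (card {q \<in> GG ws. p \<le> q}))
      else int (kk ws) + 2,
      int (length ws) + 2 - l))"

definition LX :: "int list \<Rightarrow> nat \<Rightarrow> int" where
  "LX ws p = (if p \<le> kk ws then int p + 2 else int (kk ws) + 1)"
definition LY :: "int list \<Rightarrow> nat \<Rightarrow> int \<Rightarrow> int" where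
  "LY ws p l = (if l = mx ws + 1 then (if p \<le> kk ws then int (yy ws) + 1
                              else int (kk ws) + 1 + int (card {q \<in> GG ws. p \<le> q}))
      else int (kk ws) + 2)"
definition LZ :: "int list \<Rightarrow> int \<Rightarrow> int" where
  "LZ ws l = int (length ws) + 2 - l"

lemma Lf_eq: "Lf ws (p, l) = (LX ws p, LY ws p l, LZ ws l)"
  unfolding Lf_def LX_def LY_def LZ_def by simp

lemma lab_child:
  assumes "Inv ws" "(p, l) \<in> VP ws"
  shows "lab (ins p l ws) = Lf ws (p, l)"
proof -
  have pl: "p \<le> length ws" "mx ws < l" "l \<le> int (length ws) + 1"
      "if l = mx ws + 1 then \<not> bad ws p else p \<le> kk ws" using assms(2) unfolding VP_def by auto
  interpret insctx ws p l by (rule insctx_of_Inv[OF assms(1) pl(1-3)])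
  have x: "int (kk w2) + 1 = (if p \<le> kk ws then int p + 2 else int (kk ws) + 1)"
    using kk_w2 by simp
  have y: "int (yy w2) = (if l = mx ws + 1 then (if p \<le> kk ws then int (yy ws) + 1
                              else int (kk ws) + 1 + int (card {q \<in> GG ws. p \<le> q}))
      else int (kk ws) + 2)"
  proof (cases "l = mx ws + 1")
    case True
    show ?thesis
    proof (cases "p \<le> kk ws")
      case True2: True
      then show ?thesis using yy_w2_lo[OF True True2] True by simp
    next
      case False
      then show ?thesis using yy_w2_hi[OF True] True by simp
    qed
  next
    case False
    then have "p \<le> kk ws" using pl(4) by simp
    then show ?thesis using yy_w2_big[OF False] False by simp
  qed
  have z: "int (length w2) + 1 - mx w2 = int (length ws) + 2 - l" using mx_w2 by simp
  show ?thesis unfolding lab_def Lf_def using x y z by simp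
qed


lemma card_ge_bij:
  fixes S :: "nat set"
  assumes fin: "finite S"
  shows "bij_betw (\<lambda>p. card {q\<in>S. p \<le> q}) S {1..card S}"
proof -
  let ?f = "\<lambda>p. card {q\<in>S. p \<le> q}"
  have strict: "?f b < ?f a" if "a \<in> S" "b \<in> S" "a < b" for a b
  proof -
    have "{q\<in>S. b \<le> q} \<subseteq> {q\<in>S. a \<le> q}" using that by auto
    moreover have "a \<in> {q\<in>S. a \<le> q}" "a \<notin> {q\<in>S. b \<le> q}" using that by auto
    ultimately have "{q\<in>S. b \<le> q} \<subset> {q\<in>S. a \<le> q}" by blast
    then show ?thesis using fin by (intro psubset_card_mono) auto
  qed
  have inj: "inj_on ?f S"
  proof (rule inj_onI)
    fix p p' assume pp: "p \<in> S" "p' \<in> S" "?f p = ?f p'"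
    show "p = p'"
    proof (rule ccontr)
      assume "p \<noteq> p'"
      then consider "p < p'" | "p' < p" by linarith
      then show False
      proof cases
        case 1 then show False using strict[OF pp(1,2)] pp(3) by simp
      next
        case 2 then show False using strict[OF pp(2,1)] pp(3) by simp
      qed
    qed
  qed
  have sub: "?f ` S \<subseteq> {1..card S}"
  proof
    fix c assume "c \<in> ?f ` S"
    then obtain p where p: "p \<in> S" "c = ?f p" by blast
    have "p \<in> {q\<in>S. p \<le> q}" using p by simp
    then have "1 \<le> c" using p fin by (metis (no_types, lifting) One_nat_def Suc_leI card_gt_0_iff empty_iff finite_subset mem_Collect_eq subsetI)
    moreover have "card {q \<in> S. p \<le> q} \<le> card S" using fin by (intro card_mono) auto
    then have "c \<le> card S" using p by simp
    ultimately show "c \<in> {1..card S}" by simp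
  qed
  have "card (?f ` S) = card {1..card S}" using card_image[OF inj] by simp
  then have "?f ` S = {1..card S}" using sub by (intro card_subset_eq) auto
  then show ?thesis unfolding bij_betw_def using inj by simp
qed

definition SS :: "int list \<Rightarrow> nat set" where
  "SS ws = {q \<in> GG ws. kk ws < q}"

lemma SS_card: "card (SS ws) + Suc (kk ws) = yy ws"
proof -
  have eq: "GG ws = {..kk ws} \<union> SS ws"
  proof (rule set_eqI)
    fix x show "x \<in> GG ws \<longleftrightarrow> x \<in> {..kk ws} \<union> SS ws"
    proof (cases "x \<le> kk ws")
      case True then show ?thesis using GG_low[OF True] unfolding SS_def by simp
    qed (auto simp: SS_def)
  qed
  have fS: "finite (SS ws)" unfolding SS_def by (rule finite_subset[OF _ GG_fin]) auto
  have "card ({..kk ws} \<union> SS ws) = card {..kk ws} + card (SS ws)"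
    by (rule card_Un_disjoint) (simp, rule fS, auto simp: SS_def)
  then show ?thesis unfolding yy_def by (simp only: eq[symmetric] card_atMost)
qed

lemma SS_fin: "finite (SS ws)" unfolding SS_def by (rule finite_subset[OF _ GG_fin]) auto

lemma SS_ge: "kk ws < p \<Longrightarrow> {q \<in> GG ws. p \<le> q} = {q \<in> SS ws. p \<le> q}"
  unfolding SS_def by auto

lemma SS_bij: "bij_betw (\<lambda>p. card {q\<in>SS ws. p \<le> q}) (SS ws) {1..card (SS ws)}"
  by (rule card_ge_bij[OF SS_fin])

lemma Lf_inj:
  assumes "Inv ws"
  shows "inj_on (Lf ws) (VP ws)"
proof (rule inj_onI)
  fix u v assume uv: "u \<in> VP ws" "v \<in> VP ws" "Lf ws u = Lf ws v"
  obtain p l where u: "u = (p, l)" by (cases u)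
  obtain p' l' where v: "v = (p', l')" by (cases v)
  have pl: "p \<le> length ws" "mx ws < l" "l \<le> int (length ws) + 1"
      "if l = mx ws + 1 then \<not> bad ws p else p \<le> kk ws" using uv(1) u unfolding VP_def by auto
  have pl': "p' \<le> length ws" "mx ws < l'" "l' \<le> int (length ws) + 1"
      "if l' = mx ws + 1 then \<not> bad ws p' else p' \<le> kk ws" using uv(2) v unfolding VP_def by auto
  have H: "(LX ws p, LY ws p l, LZ ws l) = (LX ws p', LY ws p' l', LZ ws l')"
    using uv(3) u v Lf_eq by simp
  have E: "LX ws p = LX ws p'" "LY ws p l = LY ws p' l'" "LZ ws l = LZ ws l'" using H by simp_all
  have ll: "l' = l" using E(3) unfolding LZ_def by simp
  have bound: "int (card {q \<in> GG ws. r \<le> q}) \<le> int (yy ws) - int (kk ws) - 1" if "kk ws < r" for r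
  proof -
    have "card {q \<in> GG ws. r \<le> q} \<le> card (SS ws)" unfolding SS_ge[OF that] using SS_fin by (intro card_mono) auto
    then show ?thesis using SS_card[of ws] by simp
  qed
  have "p = p'"
  proof (cases "l = mx ws + 1")
    case True
    have inG: "\<And>r. r \<le> length ws \<Longrightarrow> \<not> bad ws r \<Longrightarrow> kk ws < r \<Longrightarrow> r \<in> SS ws"
      unfolding SS_def GG_def by simp
    consider "p \<le> kk ws" "p' \<le> kk ws" | "p \<le> kk ws" "\<not> p' \<le> kk ws" | "\<not> p \<le> kk ws" "p' \<le> kk ws"
      | "\<not> p \<le> kk ws" "\<not> p' \<le> kk ws" by blast
    then show ?thesis
    proof cases
      case 1 then show ?thesis using E(1) unfolding LX_def by simp
    next
      case 2 then show ?thesis using E(2) True ll bound[of p'] unfolding LY_def by simp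
    next
      case 3 then show ?thesis using E(2) True ll bound[of p] unfolding LY_def by simp
    next
      case 4
      have S: "p \<in> SS ws" "p' \<in> SS ws" using inG 4 pl pl' True ll by auto
      have "card {q \<in> SS ws. p \<le> q} = card {q \<in> SS ws. p' \<le> q}"
        using E(2) True ll 4 SS_ge[of ws p] SS_ge[of ws p'] unfolding LY_def by simp
      then show ?thesis using bij_betw_imp_inj_on[OF SS_bij] S by (meson inj_onD)
    qed
  next
    case False
    then show ?thesis using pl(4) pl'(4) ll E(1) unfolding LX_def by simp
  qed
  then show "u = v" using u v ll by simp
qed


lemma sucN_same: "sucN x x k = {(a, x + 1, c) | a c. 2 \<le> a \<and> a \<le> x + 1 \<and> 1 \<le> c \<and> c \<le> int k}"
proof (induction k)
  case 0 then show ?case by auto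
next
  case (Suc k)
  show ?case
  proof (rule set_eqI)
    fix t
    show "t \<in> sucN x x (Suc k) \<longleftrightarrow> t \<in> {(a, x + 1, c) | a c. 2 \<le> a \<and> a \<le> x + 1 \<and> 1 \<le> c \<and> c \<le> int (Suc k)}"
      unfolding sucN.simps Suc.IH by force
  qed
qed

lemma suc_label_lab:
  assumes "Inv ws"
  shows "suc_label (lab ws) =
    {(a, int (yy ws) + 1, int (length ws) + 1 - mx ws) | a. 2 \<le> a \<and> a \<le> int (kk ws) + 2}
    \<union> {(int (kk ws) + 1, b, int (length ws) + 1 - mx ws) | b. int (kk ws) + 2 \<le> b \<and> b \<le> int (yy ws)}
    \<union> {(a, int (kk ws) + 2, c) | a c. 2 \<le> a \<and> a \<le> int (kk ws) + 2 \<and> 1 \<le> c \<and> c \<le> int (length ws) - mx ws}"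
proof -
  have mn: "0 \<le> mx ws" "mx ws \<le> int (length ws)" using mx_nonneg mx_le assms unfolding Inv_def by auto
  have N: "nat (int (length ws) + 1 - mx ws) = Suc (nat (int (length ws) - mx ws))" using mn by simp
  have z: "int (Suc (nat (int (length ws) - mx ws))) = int (length ws) + 1 - mx ws"
    "int (nat (int (length ws) - mx ws)) = int (length ws) - mx ws" using mn by simp_all
  have "suc_label (lab ws) = sucN (int (kk ws) + 1) (int (yy ws)) (Suc (nat (int (length ws) - mx ws)))"
    unfolding suc_label_def lab_def using mn N by simp
  also have "\<dots> = {(a, int (yy ws) + 1, int (length ws) + 1 - mx ws) | a. 2 \<le> a \<and> a \<le> int (kk ws) + 1 + 1}
    \<union> {(int (kk ws) + 1, b, int (length ws) + 1 - mx ws) | b. int (kk ws) + 1 + 1 \<le> b \<and> b \<le> int (yy ws)}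
    \<union> {(a, int (kk ws) + 1 + 1, c) | a c. 2 \<le> a \<and> a \<le> int (kk ws) + 1 + 1 \<and> 1 \<le> c \<and> c \<le> int (length ws) - mx ws}"
    unfolding sucN.simps sucN_same z by simp
  also have "int (kk ws) + 1 + 1 = int (kk ws) + 2" by simp
  finally show ?thesis .
qed

lemma Lf_img:
  assumes "Inv ws"
  shows "Lf ws ` VP ws = suc_label (lab ws)"
proof -
  let ?K = "kk ws" and ?Y = "yy ws" and ?m = "mx ws" and ?n = "length ws"
  have mn: "0 \<le> ?m" "?m \<le> int ?n" using mx_nonneg mx_le assms unfolding Inv_def by auto
  have Kn: "?K \<le> ?n" by (rule kk_le)
  let ?A = "{(a, int ?Y + 1, int ?n + 1 - ?m) | a. 2 \<le> a \<and> a \<le> int ?K + 2}"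
  let ?B = "{(int ?K + 1, b, int ?n + 1 - ?m) | b. int ?K + 2 \<le> b \<and> b \<le> int ?Y}"
  let ?C = "{(a, int ?K + 2, c) | a c. 2 \<le> a \<and> a \<le> int ?K + 2 \<and> 1 \<le> c \<and> c \<le> int ?n - ?m}"
  have SSc: "card (SS ws) + Suc ?K = ?Y" by (rule SS_card)
  have "Lf ws ` VP ws = ?A \<union> ?B \<union> ?C"
  proof (rule set_eqI)
    fix t show "t \<in> Lf ws ` VP ws \<longleftrightarrow> t \<in> ?A \<union> ?B \<union> ?C"
    proof
      assume "t \<in> Lf ws ` VP ws"
      then obtain u where u: "u \<in> VP ws" "t = Lf ws u" by blast
      obtain p l where ul: "u = (p, l)" by (cases u)
      have pl: "p \<le> ?n" "?m < l" "l \<le> int ?n + 1"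
        "if l = ?m + 1 then \<not> bad ws p else p \<le> ?K" using u(1) ul unfolding VP_def by auto
      have t: "t = (LX ws p, LY ws p l, LZ ws l)" using u ul Lf_eq by simp
      show "t \<in> ?A \<union> ?B \<union> ?C"
      proof (cases "l = ?m + 1")
        case True
        show ?thesis
        proof (cases "p \<le> ?K")
          case True2: True
          then have "t \<in> ?A" using t True unfolding LX_def LY_def LZ_def by auto
          then show ?thesis by blast
        next
          case False
          have pS: "p \<in> SS ws" using pl True False unfolding SS_def GG_def by simp
          have c: "card {q \<in> GG ws. p \<le> q} = card {q \<in> SS ws. p \<le> q}" using SS_ge[of ws p] False by simp
          have "card {q \<in> SS ws. p \<le> q} \<in> {1..card (SS ws)}" using bij_betw_apply[OF SS_bij pS] by simp
          then have "t \<in> ?B" using t True False c SSc unfolding LX_def LY_def LZ_def by auto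
          then show ?thesis by blast
        qed
      next
        case False
        then have "p \<le> ?K" using pl by simp
        then have "t \<in> ?C" using t False pl unfolding LX_def LY_def LZ_def by auto
        then show ?thesis by blast
      qed
    next
      assume "t \<in> ?A \<union> ?B \<union> ?C"
      then consider "t \<in> ?A" | "t \<in> ?B" | "t \<in> ?C" by blast
      then show "t \<in> Lf ws ` VP ws"
      proof cases
        case 1
        then obtain a where a: "t = (a, int ?Y + 1, int ?n + 1 - ?m)" "2 \<le> a" "a \<le> int ?K + 2" by blast
        define p where "p = nat (a - 2)"
        have p: "p \<le> ?K" "int p + 2 = a" using a unfolding p_def by auto
        have "p \<in> GG ws" using GG_low p by simp
        then have "(p, ?m + 1) \<in> VP ws" using p Kn mn unfolding VP_def GG_def by auto
        moreover have "t = Lf ws (p, ?m + 1)" using a p unfolding Lf_eq LX_def LY_def LZ_def by simp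
        ultimately show ?thesis by blast
      next
        case 2
        then obtain b where b: "t = (int ?K + 1, b, int ?n + 1 - ?m)" "int ?K + 2 \<le> b" "b \<le> int ?Y" by blast
        define c where "c = nat (b - int ?K - 1)"
        have c: "c \<in> {1..card (SS ws)}" "int c = b - int ?K - 1" using b SSc unfolding c_def by auto
        then obtain p where pS: "p \<in> SS ws" "card {q \<in> SS ws. p \<le> q} = c"
          using SS_bij[of ws] unfolding bij_betw_def by (metis (no_types, lifting) imageE)
        have pK: "?K < p" "p \<in> GG ws" using pS unfolding SS_def by auto
        have "(p, ?m + 1) \<in> VP ws" using pK mn unfolding VP_def GG_def by auto
        moreover have "t = Lf ws (p, ?m + 1)"
          using b pK pS c SS_ge[of ws p] unfolding Lf_eq LX_def LY_def LZ_def by simp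
        ultimately show ?thesis by blast
      next
        case 3
        then obtain a c where ac: "t = (a, int ?K + 2, c)" "2 \<le> a" "a \<le> int ?K + 2" "1 \<le> c" "c \<le> int ?n - ?m"
          by blast
        define p where "p = nat (a - 2)"
        have p: "p \<le> ?K" "int p + 2 = a" using ac unfolding p_def by auto
        define l where "l = int ?n + 2 - c"
        have l: "?m + 1 < l" "l \<le> int ?n + 1" "l \<noteq> ?m + 1" using ac unfolding l_def by auto
        have "(p, l) \<in> VP ws" using p l Kn unfolding VP_def by auto
        moreover have "t = Lf ws (p, l)" using ac p l unfolding Lf_eq LX_def LY_def LZ_def l_def by simp
        ultimately show ?thesis by blast
      qed
    qed
  qed
  then show ?thesis using suc_label_lab[OF assms] by simp
qed


lemma root_len: "length (bt_root j) = j"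
  unfolding bt_root_def by simp

lemma root_nth: "t < j \<Longrightarrow> bt_root j ! t = int t - int j"
  unfolding bt_root_def by (simp add: nth_upto)

lemma root_lt: "a < b \<Longrightarrow> b < j \<Longrightarrow> bt_root j ! a < bt_root j ! b"
  using root_nth[of a j] root_nth[of b j] by simp

lemma root_Inv: "Inv (bt_root j)"
proof -
  let ?w = "bt_root j"
  have perm: "perm_ok ?w"
  proof (rule perm_okI)
    show "distinct (map abs ?w)"
    proof (subst distinct_conv_nth, intro allI impI)
      fix a b assume "a < length (map abs ?w)" "b < length (map abs ?w)" "a \<noteq> b"
      then show "map abs ?w ! a \<noteq> map abs ?w ! b" using root_nth[of a j] root_nth[of b j] root_len[of j] by simp
    qed
    show "\<forall>x\<in>set ?w. 1 \<le> \<bar>x\<bar> \<and> \<bar>x\<bar> \<le> int (length ?w)"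
    proof
      fix x assume "x \<in> set ?w"
      then obtain t where "t < j" "x = ?w ! t" using root_len[of j] by (auto simp: in_set_conv_nth)
      then show "1 \<le> \<bar>x\<bar> \<and> \<bar>x\<bar> \<le> int (length ?w)" using root_nth[of t j] root_len[of j] by simp
    qed
  qed
  have fwv: "t < 2 * j \<Longrightarrow> fw ?w t = (if t < j then int t - int j else int t + 1 - int j)" for t
    unfolding fw_def root_len using root_nth[of t j] root_nth[of "2 * j - 1 - t" j] by auto
  have fwm: "a < b \<Longrightarrow> b < 2 * j \<Longrightarrow> fw ?w a < fw ?w b" for a b
    using fwv[of a] fwv[of b] by auto
  have av: "avoids_2143 ?w"
    unfolding avoids_pat
  proof
    assume "\<exists>a b c d. pat ?w a b c d"
    then obtain a b c d where "pat ?w a b c d" by blast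
    then have "a < b" "b < 2 * j" "fw ?w b < fw ?w a" unfolding pat_def root_len by auto
    then show False using fwm[of a b] by simp
  qed
  have "inc3 ?w (mx ?w)" unfolding inc3_def using root_lt root_len by auto
  then show ?thesis unfolding Inv_def using perm av by simp
qed

lemma root_mx: "mx (bt_root j) = 0"
proof -
  have "\<forall>x\<in>set (bt_root j). x \<le> 0"
  proof
    fix x assume "x \<in> set (bt_root j)"
    then obtain t where "t < j" "x = bt_root j ! t" using root_len[of j] by (auto simp: in_set_conv_nth)
    then show "x \<le> 0" using root_nth[of t j] by simp
  qed
  then show ?thesis unfolding mx_def by (intro Max_eqI) auto
qed

lemma root_sorted: "sortedpre (bt_root j) q \<or> j < q"
  unfolding sortedpre_def using root_lt[of _ _ j] by auto

lemma root_kk: "kk (bt_root j) = j"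
proof -
  have "kk (bt_root j) = Max {q. q \<le> j \<and> sortedpre (bt_root j) q}" unfolding kk_def root_len ..
  also have "\<dots> = j"
  proof (rule max_char)
    show "\<forall>q\<le>j. sortedpre (bt_root j) q \<longleftrightarrow> q \<le> j"
    proof (intro allI impI)
      fix q assume "q \<le> j"
      then show "sortedpre (bt_root j) q \<longleftrightarrow> q \<le> j" using root_sorted[of j q] by auto
    qed
  qed simp
  finally show ?thesis .
qed

lemma root_yy: "yy (bt_root j) = Suc j"
proof -
  have "GG (bt_root j) = {..j}"
    unfolding GG_def root_len using root_sorted[of j] sorted_not_bad by fastforce
  then show ?thesis unfolding yy_def by simp
qed

lemma root_lab: "lab (bt_root j) = (int j + 1, int j + 1, int j + 1)"
  unfolding lab_def root_kk root_yy root_mx root_len by simp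

theorem proposition2p6:
  fixes j :: nat
  shows "rooted_tree_iso (int j + 1, int j + 1, int j + 1) suc_label (bt_root j) bt_children"
proof (rule tree_iso_label[where I = Inv and lab = lab])
  show "Inv (bt_root j)" by (rule root_Inv)
next
  show "lab (bt_root j) = (int j + 1, int j + 1, int j + 1)" by (rule root_lab)
next
  fix w c assume w: "Inv w" and c: "c \<in> bt_children w"
  then obtain u where u: "u \<in> VP w" "c = (\<lambda>(p, l). ins p l w) u" using children_eq[OF w] by blast
  obtain p l where "u = (p, l)" by (cases u)
  then show "Inv c" using Inv_child[OF w] u by simp
next
  fix w assume w: "Inv w"
  show "inj_on lab (bt_children w)"
  proof (rule inj_onI)
    fix c1 c2 assume c: "c1 \<in> bt_children w" "c2 \<in> bt_children w" "lab c1 = lab c2"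
    obtain u1 where u1: "u1 \<in> VP w" "c1 = (\<lambda>(p, l). ins p l w) u1" using c(1) children_eq[OF w] by blast
    obtain u2 where u2: "u2 \<in> VP w" "c2 = (\<lambda>(p, l). ins p l w) u2" using c(2) children_eq[OF w] by blast
    have l1: "lab c1 = Lf w u1" using lab_child[OF w] u1 by (cases u1) simp
    have l2: "lab c2 = Lf w u2" using lab_child[OF w] u2 by (cases u2) simp
    have "u1 = u2" using inj_onD[OF Lf_inj[OF w]] l1 l2 c(3) u1(1) u2(1) by simp
    then show "c1 = c2" using u1 u2 by simp
  qed
next
  fix w assume w: "Inv w"
  have "lab ` bt_children w = lab ` (\<lambda>(p, l). ins p l w) ` VP w" using children_eq[OF w] by simp
  also have "\<dots> = (\<lambda>u. lab ((\<lambda>(p, l). ins p l w) u)) ` VP w" by (simp add: image_image)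
  also have "\<dots> = Lf w ` VP w"
  proof (rule image_cong[OF refl])
    fix u assume "u \<in> VP w"
    then show "lab ((\<lambda>(p, l). ins p l w) u) = Lf w u" using lab_child[OF w] by (cases u) simp
  qed
  also have "\<dots> = suc_label (lab w)" by (rule Lf_img[OF w])
  finally show "lab ` bt_children w = suc_label (lab w)" .
qed


end
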